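(* Let $\mathcal{P}$ be a hereditary property of ordered graphs. Suppose that for arbitrarily large values of $k$ some ordered graph in $\mathcal{P}$ contains a $k$-structure of Type 1 or of Type 2. Then $|\mathcal{P}_n| \geqslant 2^{n-1}$ for every $n \in \mathbb{N}$.
   Context: Ordered graphs of order $n$ have vertex set $[n]$ with the natural order; a hereditary property is a collection of ordered graphs closed under order-preserving isomorphism and induced ordered subgraphs; $\mathcal{P}_n$ is the set of members with vertex set $[n]$. A $k$-structure of Type 1 in $G$ consists of vertices $y$ and $x_1<\dots<x_{2k}$ with $y<x_1$ or $y>x_{2k}$, such that for $1\leqslant i<2k$, $yx_i\in E(G)$ iff $yx_{i+1}\notin E(G)$. A $k$-structure of Type 2 is one of Type 2(a): vertices $x_1<\dots<x_{2k}<y_1<\dots<y_{2k}$, or of Type 2(b): vertices $x_1<\dots<x_{2k}<y_{2k}<\dots<y_1$, in either case such that for $1\leqslant i<2k$, $x_iy_i\in E(G)$ iff $x_{i+1}y_{i+1}\notin E(G)$. *)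

theory Defs
  imports Main
begin

text \<open>An ordered graph of order n is represented as a pair (n, E): vertex set {1..n}
  with the natural order, E a set of 2-element subsets of {1..n}.\<close>

definition ordered_graph :: "nat \<Rightarrow> nat set set \<Rightarrow> bool" where
  "ordered_graph n E \<longleftrightarrow>
     E \<subseteq> {{u, v} | u v. u \<in> {1..n} \<and> v \<in> {1..n} \<and> u \<noteq> v}"

text \<open>Induced ordered subgraph on the image of an order embedding f : {1..m} -> {1..n},
  relabelled to vertex set {1..m}.\<close>
definition induced_ordered :: "nat set set \<Rightarrow> (nat \<Rightarrow> nat) \<Rightarrow> nat \<Rightarrow> nat set set" where
  "induced_ordered E f m =
     {{u, v} | u v. u \<in> {1..m} \<and> v \<in> {1..m} \<and> u \<noteq> v \<and> {f u, f v} \<in> E}"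

text \<open>Since all graphs of order n live on {1..n}, closure under
  order-preserving isomorphism is automatic in this representation; closure under induced
  ordered subgraphs is closure under restriction along order embeddings.\<close>
definition hereditary :: "(nat \<times> nat set set) set \<Rightarrow> bool" where
  "hereditary P \<longleftrightarrow>
     (\<forall>(n, E) \<in> P. ordered_graph n E) \<and>
     (\<forall>(n, E) \<in> P. \<forall>m f. strict_mono_on {1..m} f \<and> f ` {1..m} \<subseteq> {1..n}
        \<longrightarrow> (m, induced_ordered E f m) \<in> P)"

definition slice :: "(nat \<times> nat set set) set \<Rightarrow> nat \<Rightarrow> nat set set set" where
  "slice P n = {E. (n, E) \<in> P}"

definition kstruct1 :: "nat \<Rightarrow> nat \<Rightarrow> nat set set \<Rightarrow> bool" where
  "kstruct1 k n E \<longleftrightarrow>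
     (\<exists>y x. y \<in> {1..n} \<and> x ` {1..2*k} \<subseteq> {1..n} \<and> strict_mono_on {1..2*k} x \<and>
        (y < x 1 \<or> y > x (2*k)) \<and>
        (\<forall>i \<in> {1..<2*k}. {y, x i} \<in> E \<longleftrightarrow> {y, x (i+1)} \<notin> E))"

definition kstruct2a :: "nat \<Rightarrow> nat \<Rightarrow> nat set set \<Rightarrow> bool" where
  "kstruct2a k n E \<longleftrightarrow>
     (\<exists>x y. x ` {1..2*k} \<subseteq> {1..n} \<and> y ` {1..2*k} \<subseteq> {1..n} \<and>
        strict_mono_on {1..2*k} x \<and> strict_mono_on {1..2*k} y \<and> x (2*k) < y 1 \<and>
        (\<forall>i \<in> {1..<2*k}. {x i, y i} \<in> E \<longleftrightarrow> {x (i+1), y (i+1)} \<notin> E))"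

definition kstruct2b :: "nat \<Rightarrow> nat \<Rightarrow> nat set set \<Rightarrow> bool" where
  "kstruct2b k n E \<longleftrightarrow>
     (\<exists>x y. x ` {1..2*k} \<subseteq> {1..n} \<and> y ` {1..2*k} \<subseteq> {1..n} \<and>
        strict_mono_on {1..2*k} x \<and> strict_antimono_on {1..2*k} y \<and> x (2*k) < y (2*k) \<and>
        (\<forall>i \<in> {1..<2*k}. {x i, y i} \<in> E \<longleftrightarrow> {x (i+1), y (i+1)} \<notin> E))"

definition kstruct2 :: "nat \<Rightarrow> nat \<Rightarrow> nat set set \<Rightarrow> bool" where
  "kstruct2 k n E \<longleftrightarrow> kstruct2a k n E \<or> kstruct2b k n E"

end

theory Submission
  imports Defs "HOL-Library.Ramsey"
begin

lemma ind_edge: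
  assumes "u \<in> {1..n}" "v \<in> {1..n}" "u \<noteq> v"
  shows "{u,v} \<in> induced_ordered E f n \<longleftrightarrow> {f u, f v} \<in> E"
proof
  assume "{u,v} \<in> induced_ordered E f n"
  then obtain u' v' where h: "{u,v} = {u',v'}" "{f u', f v'} \<in> E"
    unfolding induced_ordered_def by blast
  from h(1) have "(u = u' \<and> v = v') \<or> (u = v' \<and> v = u')"
    by (metis doubleton_eq_iff)
  then show "{f u, f v} \<in> E" using h(2) by (auto simp: insert_commute)
next
  assume "{f u, f v} \<in> E"
  then show "{u,v} \<in> induced_ordered E f n"
    unfolding induced_ordered_def using assms by blast
qed

lemma ind_eq_edge:
  assumes "induced_ordered E f n = induced_ordered E g n"
    "u \<in> {1..n}" "v \<in> {1..n}" "u \<noteq> v"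
  shows "({f u, f v} \<in> E) = ({g u, g v} \<in> E)"
  using ind_edge[OF assms(2-4), of E f] ind_edge[OF assms(2-4), of E g] assms(1) by simp

lemma ind_in_P:
  assumes "hereditary P" "(N,E) \<in> P" "strict_mono_on {1..n} f" "f ` {1..n} \<subseteq> {1..N}"
  shows "(n, induced_ordered E f n) \<in> P"
  using assms unfolding hereditary_def by fast

lemma slice_finite:
  assumes "hereditary P"
  shows "finite (slice P n)"
proof -
  have "slice P n \<subseteq> Pow (Pow {1..n})"
  proof
    fix E assume "E \<in> slice P n"
    then have "ordered_graph n E" using assms unfolding slice_def hereditary_def by fast
    then show "E \<in> Pow (Pow {1..n})" unfolding ordered_graph_def by auto
  qed
  then show ?thesis by (rule finite_subset) simp
qed

lemma count_lemma:
  assumes "hereditary P" "finite F" "c \<le> card F"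
    "\<And>a. a \<in> F \<Longrightarrow> (n, G a) \<in> P" "inj_on G F"
  shows "c \<le> card (slice P n)"
proof -
  have "G ` F \<subseteq> slice P n" using assms(4) unfolding slice_def by auto
  then have "card (G ` F) \<le> card (slice P n)"
    using slice_finite[OF assms(1)] by (simp add: card_mono)
  moreover have "card (G ` F) = card F" using assms(5) by (simp add: card_image)
  ultimately show ?thesis using assms(3) by simp
qed


lemma bool_lists_card: "card {bs :: bool list. set bs \<subseteq> UNIV \<and> length bs = m} = 2 ^ m"
  using card_lists_length_eq[of "UNIV :: bool set" m] by simp

lemma bool_lists_finite: "finite {bs :: bool list. set bs \<subseteq> UNIV \<and> length bs = m}"
  using finite_lists_length_eq[of "UNIV :: bool set" m] by simp

lemma type1:
  assumes her: "hereditary P" and inP: "(N,E) \<in> P" and ks: "kstruct1 k N E"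
    and n1: "n \<ge> 1" and nk: "n \<le> k + 1"
  shows "2^(n-1) \<le> card (slice P n)"
proof -
  obtain y x where y: "y \<in> {1..N}" and xr: "x ` {1..2*k} \<subseteq> {1..N}"
    and xm: "strict_mono_on {1..2*k} x" and side: "y < x 1 \<or> y > x (2*k)"
    and alt: "\<forall>i \<in> {1..<2*k}. {y, x i} \<in> E \<longleftrightarrow> {y, x (i+1)} \<notin> E"
    using ks unfolding kstruct1_def by blast
  define sel where "sel i b = (if ({y, x (2*i)} \<in> E) = b then 2*i else 2*i - 1)" for i b
  have sel_range: "sel i b \<in> {1..2*k}" "2*i - 1 \<le> sel i b" "sel i b \<le> 2*i"
    if "i \<in> {1..k}" for i b using that unfolding sel_def by auto
  have sel_edge: "({y, x (sel i b)} \<in> E) = b" if "i \<in> {1..k}" for i b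
  proof -
    have "2*i - 1 \<in> {1..<2*k}" using that by auto
    with alt have "{y, x (2*i-1)} \<in> E \<longleftrightarrow> {y, x (2*i-1+1)} \<notin> E" by blast
    moreover have "2*i-1+1 = 2*i" using that by auto
    ultimately have "{y, x (2*i-1)} \<in> E \<longleftrightarrow> {y, x (2*i)} \<notin> E" by simp
    then show ?thesis unfolding sel_def by auto
  qed
  have xlt: "x i < x j" if "i \<in> {1..2*k}" "j \<in> {1..2*k}" "i < j" for i j
    using xm that by (simp add: strict_mono_onD)
  have xle: "x 1 \<le> x i" "x i \<le> x (2*k)" if "i \<in> {1..2*k}" for i
    using xlt[of 1 i] xlt[of i "2*k"] that by (cases "i = 1"; cases "i = 2*k"; auto)+
  define F where "F = {bs :: bool list. set bs \<subseteq> UNIV \<and> length bs = n - 1}"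
  have Ffin: "finite F" and Fcard: "card F = 2^(n-1)"
    unfolding F_def by (rule bool_lists_finite, rule bool_lists_card)
  from side show ?thesis
  proof
    assume ylt: "y < x 1"
    define emb where "emb bs j = (if j = 1 then y else x (sel (j-1) (bs!(j-2))))" for bs j
    have mono: "strict_mono_on {1..n} (emb bs)" for bs
    proof (rule strict_mono_onI)
      fix r s assume rs: "r \<in> {1..n}" "s \<in> {1..n}" "r < s"
      show "emb bs r < emb bs s"
      proof (cases "r = 1")
        case True
        then have "emb bs s = x (sel (s-1) (bs!(s-2)))" using rs unfolding emb_def by auto
        moreover have "sel (s-1) (bs!(s-2)) \<in> {1..2*k}" using rs nk by (intro sel_range) auto
        ultimately show ?thesis using True ylt xle unfolding emb_def by fastforce
      next
        case False
        then have "emb bs r = x (sel (r-1) (bs!(r-2)))" "emb bs s = x (sel (s-1) (bs!(s-2)))"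
          using rs unfolding emb_def by auto
        moreover have "sel (r-1) (bs!(r-2)) \<in> {1..2*k}" "sel (s-1) (bs!(s-2)) \<in> {1..2*k}"
          "sel (r-1) (bs!(r-2)) \<le> 2*(r-1)" "2*(s-1) - 1 \<le> sel (s-1) (bs!(s-2))"
          using rs nk False by (intro sel_range; auto)+
        moreover have "sel (r-1) (bs!(r-2)) < sel (s-1) (bs!(s-2))"
        proof -
          have "2*(r-1) < 2*(s-1) - 1" using rs False by auto
          then show ?thesis using calculation(5,6) by linarith
        qed
        ultimately show ?thesis using xlt by simp
      qed
    qed
    show ?thesis
    proof (rule count_lemma[OF her Ffin, of "2^(n-1)" n "\<lambda>bs. induced_ordered E (emb bs) n"])
      show "2^(n-1) \<le> card F" using Fcard by simp
      fix bs assume "bs \<in> F"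
      have "emb bs ` {1..n} \<subseteq> {1..N}"
      proof
        fix v assume "v \<in> emb bs ` {1..n}"
        then obtain j where j: "j \<in> {1..n}" "v = emb bs j" by blast
        show "v \<in> {1..N}"
        proof (cases "j = 1")
          case True then show ?thesis using j y unfolding emb_def by simp
        next
          case False
          then have "sel (j-1) (bs!(j-2)) \<in> {1..2*k}" using j nk by (intro sel_range) auto
          then have "x (sel (j-1) (bs!(j-2))) \<in> {1..N}" using xr by blast
          then show ?thesis using j False unfolding emb_def by simp
        qed
      qed
      then show "(n, induced_ordered E (emb bs) n) \<in> P" by (rule ind_in_P[OF her inP mono])
    next
      show "inj_on (\<lambda>bs. induced_ordered E (emb bs) n) F"
      proof (rule inj_onI)
        fix bs cs assume bs: "bs \<in> F" and cs: "cs \<in> F"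
          and eq: "induced_ordered E (emb bs) n = induced_ordered E (emb cs) n"
        show "bs = cs"
        proof (rule nth_equalityI)
          show "length bs = length cs" using bs cs unfolding F_def by simp
          fix i assume i: "i < length bs"
          then have i2: "i + 2 \<in> {1..n}" "i + 1 \<in> {1..k}" using bs nk unfolding F_def by auto
          have "({emb bs 1, emb bs (i+2)} \<in> E) = ({emb cs 1, emb cs (i+2)} \<in> E)"
            by (rule ind_eq_edge[OF eq]) (use i2 n1 in auto)
          then show "bs ! i = cs ! i" unfolding emb_def using sel_edge[OF i2(2)] by simp
        qed
      qed
    qed
  next
    assume ygt: "y > x (2*k)"
    define emb where "emb bs j = (if j = n then y else x (sel j (bs!(j-1))))" for bs j
    have mono: "strict_mono_on {1..n} (emb bs)" for bs
    proof (rule strict_mono_onI)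
      fix r s assume rs: "r \<in> {1..n}" "s \<in> {1..n}" "r < s"
      then have rn: "r \<noteq> n" by auto
      have r1: "sel r (bs!(r-1)) \<in> {1..2*k}" "sel r (bs!(r-1)) \<le> 2*r"
        using rs nk rn by (intro sel_range; auto)+
      show "emb bs r < emb bs s"
      proof (cases "s = n")
        case True
        then show ?thesis using rn r1 ygt xle unfolding emb_def by fastforce
      next
        case False
        then have "sel s (bs!(s-1)) \<in> {1..2*k}" "2*s - 1 \<le> sel s (bs!(s-1))"
          using rs nk by (intro sel_range; auto)+
        moreover have "sel r (bs!(r-1)) < sel s (bs!(s-1))" using r1 calculation rs by linarith
        ultimately show ?thesis using xlt r1 rn False unfolding emb_def by simp
      qed
    qed
    show ?thesis
    proof (rule count_lemma[OF her Ffin, of "2^(n-1)" n "\<lambda>bs. induced_ordered E (emb bs) n"])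
      show "2^(n-1) \<le> card F" using Fcard by simp
      fix bs assume "bs \<in> F"
      have "emb bs ` {1..n} \<subseteq> {1..N}"
      proof
        fix v assume "v \<in> emb bs ` {1..n}"
        then obtain j where j: "j \<in> {1..n}" "v = emb bs j" by blast
        show "v \<in> {1..N}"
        proof (cases "j = n")
          case True then show ?thesis using j y unfolding emb_def by simp
        next
          case False
          then have "sel j (bs!(j-1)) \<in> {1..2*k}" using j nk by (intro sel_range) auto
          then have "x (sel j (bs!(j-1))) \<in> {1..N}" using xr by blast
          then show ?thesis using j False unfolding emb_def by simp
        qed
      qed
      then show "(n, induced_ordered E (emb bs) n) \<in> P" by (rule ind_in_P[OF her inP mono])
    next
      show "inj_on (\<lambda>bs. induced_ordered E (emb bs) n) F"
      proof (rule inj_onI)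
        fix bs cs assume bs: "bs \<in> F" and cs: "cs \<in> F"
          and eq: "induced_ordered E (emb bs) n = induced_ordered E (emb cs) n"
        show "bs = cs"
        proof (rule nth_equalityI)
          show "length bs = length cs" using bs cs unfolding F_def by simp
          fix i assume i: "i < length bs"
          then have i2: "i + 1 \<in> {1..n}" "i + 1 \<in> {1..k}" "i + 1 \<noteq> n" using bs nk unfolding F_def by auto
          have "({emb bs n, emb bs (i+1)} \<in> E) = ({emb cs n, emb cs (i+1)} \<in> E)"
            by (rule ind_eq_edge[OF eq]) (use i2 n1 in auto)
          then show "bs ! i = cs ! i" unfolding emb_def using sel_edge[OF i2(2)] i2(3) by simp
        qed
      qed
    qed
  qed
qed


definition clean :: "bool \<Rightarrow> nat set set \<Rightarrow> nat \<Rightarrow> (nat \<Rightarrow> nat) \<Rightarrow> (nat \<Rightarrow> nat) \<Rightarrow> nat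
    \<Rightarrow> bool \<Rightarrow> bool \<Rightarrow> bool \<Rightarrow> bool \<Rightarrow> bool" where
  "clean da E N X Y M al be ga ep \<longleftrightarrow>
     X ` {1..M} \<subseteq> {1..N} \<and> Y ` {1..M} \<subseteq> {1..N} \<and> strict_mono_on {1..M} X \<and>
     (if da then strict_mono_on {1..M} Y else strict_antimono_on {1..M} Y) \<and>
     (\<forall>a\<in>{1..M}. \<forall>b\<in>{1..M}. X a < Y b) \<and>
     (\<forall>a\<in>{1..M}. \<forall>b\<in>{1..M}. a < b \<longrightarrow> ({X a, X b} \<in> E \<longleftrightarrow> al) \<and> ({Y a, Y b} \<in> E \<longleftrightarrow> be)
        \<and> ({X a, Y b} \<in> E \<longleftrightarrow> ga) \<and> ({X b, Y a} \<in> E \<longleftrightarrow> ep))"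

lemma realize:
  fixes p n :: nat
  assumes cl: "clean da E N X Y M al be ga ep"
    and bxr: "\<forall>i\<in>{1..p}. bx i \<in> {1..M}" and byr: "\<forall>i\<in>{p+1..n}. by i \<in> {1..M}"
    and bxm: "\<forall>i\<in>{1..p}. \<forall>j\<in>{1..p}. i < j \<longrightarrow> bx i < bx j"
    and bym: "\<forall>i\<in>{p+1..n}. \<forall>j\<in>{p+1..n}. i < j \<longrightarrow> (if da then by i < by j else by j < by i)"
    and fdef: "f = (\<lambda>i. if i \<le> p then X (bx i) else Y (by i))"
  shows "strict_mono_on {1..n} f" "f ` {1..n} \<subseteq> {1..N}"
    "\<And>u v. 1 \<le> u \<Longrightarrow> u < v \<Longrightarrow> v \<le> n \<Longrightarrow> ({f u, f v} \<in> E \<longleftrightarrow>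
       (if v \<le> p then al else if p < u then be else if bx u < by v then ga
        else if by v < bx u then ep else {X (bx u), Y (by v)} \<in> E))"
proof -
  have Xr: "X ` {1..M} \<subseteq> {1..N}" and Yr: "Y ` {1..M} \<subseteq> {1..N}"
    and Xm: "strict_mono_on {1..M} X"
    and Ym: "if da then strict_mono_on {1..M} Y else strict_antimono_on {1..M} Y"
    and XY: "\<forall>a\<in>{1..M}. \<forall>b\<in>{1..M}. X a < Y b"
    and ed: "\<forall>a\<in>{1..M}. \<forall>b\<in>{1..M}. a < b \<longrightarrow> ({X a, X b} \<in> E \<longleftrightarrow> al) \<and> ({Y a, Y b} \<in> E \<longleftrightarrow> be)
        \<and> ({X a, Y b} \<in> E \<longleftrightarrow> ga) \<and> ({X b, Y a} \<in> E \<longleftrightarrow> ep)"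
    using cl unfolding clean_def by blast+
  show "strict_mono_on {1..n} f"
  proof (rule strict_mono_onI)
    fix r s assume rs: "r \<in> {1..n}" "s \<in> {1..n}" "r < s"
    show "f r < f s"
    proof (cases "s \<le> p")
      case True
      then have rs': "r \<in> {1..p}" "s \<in> {1..p}" using rs by auto
      then have "bx r < bx s" "bx r \<in> {1..M}" "bx s \<in> {1..M}" using bxm bxr rs(3) by auto
      then show ?thesis using True rs Xm fdef by (simp add: strict_mono_onD)
    next
      case False
      note sF = False
      show ?thesis
      proof (cases "r \<le> p")
        case True
        then show ?thesis using sF fdef XY bxr byr rs by auto
      next
        case False
        then have r1: "r \<in> {p+1..n}" "s \<in> {p+1..n}" using rs sF by auto
        then have "by r \<in> {1..M}" "by s \<in> {1..M}" using byr by auto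
        moreover have "if da then by r < by s else by s < by r" using bym r1 rs by auto
        ultimately have "Y (by r) < Y (by s)" using Ym
          by (cases da) (auto simp: strict_mono_onD monotone_on_def)
        then show ?thesis using False sF fdef by simp
      qed
    qed
  qed
  show "f ` {1..n} \<subseteq> {1..N}"
  proof
    fix w assume "w \<in> f ` {1..n}"
    then obtain i where i: "i \<in> {1..n}" "w = f i" by blast
    show "w \<in> {1..N}"
    proof (cases "i \<le> p")
      case True
      then have "bx i \<in> {1..M}" using bxr i by auto
      then have "X (bx i) \<in> {1..N}" using Xr by blast
      then show ?thesis using i True fdef by simp
    next
      case False
      then have "by i \<in> {1..M}" using byr i by auto
      then have "Y (by i) \<in> {1..N}" using Yr by blast
      then show ?thesis using i False fdef by simp
    qed
  qed
  fix u v assume uv: "1 \<le> u" "u < v" "v \<le> n"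
  show "{f u, f v} \<in> E \<longleftrightarrow>
       (if v \<le> p then al else if p < u then be else if bx u < by v then ga
        else if by v < bx u then ep else {X (bx u), Y (by v)} \<in> E)"
  proof (cases "v \<le> p")
    case True
    then have "bx u < bx v" "bx u \<in> {1..M}" "bx v \<in> {1..M}" using bxm bxr uv by auto
    then show ?thesis using True uv ed fdef by auto
  next
    case False
    note vF = False
    show ?thesis
    proof (cases "p < u")
      case True
      then have "if da then by u < by v else by v < by u" "by u \<in> {1..M}" "by v \<in> {1..M}"
        using bym byr uv by auto
      then have "{Y (by u), Y (by v)} \<in> E \<longleftrightarrow> be"
      proof (cases da)
        case True
        then show ?thesis using ed \<open>if da then by u < by v else by v < by u\<close>
            \<open>by u \<in> {1..M}\<close> \<open>by v \<in> {1..M}\<close> by auto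
      next
        case False
        then have "by v < by u" using \<open>if da then by u < by v else by v < by u\<close> by simp
        then have "{Y (by v), Y (by u)} \<in> E \<longleftrightarrow> be"
          using ed \<open>by u \<in> {1..M}\<close> \<open>by v \<in> {1..M}\<close> by auto
        then show ?thesis by (simp add: insert_commute)
      qed
      then show ?thesis using True vF uv fdef by auto
    next
      case False
      then have fu: "f u = X (bx u)" and fv: "f v = Y (by v)" using vF fdef by auto
      have m: "bx u \<in> {1..M}" "by v \<in> {1..M}" using bxr byr uv False vF by auto
      show ?thesis using False vF ed m unfolding fu fv by auto
    qed
  qed
qed


definition SF :: "nat \<Rightarrow> nat \<Rightarrow> (nat \<times> nat list) set" where
  "SF a n = {(p, ls). 1 \<le> p \<and> p \<le> n \<and> length ls = n - p \<and> sorted ls \<and> set ls \<subseteq> {a..p-1+a}}"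

lemma SF_finite: assumes "a \<le> 1" shows "finite (SF a n)"
proof -
  have "SF a n \<subseteq> {..n} \<times> {ls. set ls \<subseteq> {..n} \<and> length ls \<le> n}"
    unfolding SF_def using assms by (force simp: subset_iff)
  moreover have "finite ({..n} \<times> {ls. set ls \<subseteq> {..n} \<and> length ls \<le> n})"
    by (simp add: finite_lists_length_le)
  ultimately show ?thesis by (rule finite_subset)
qed

lemma SF_card: assumes "a \<le> 1" "1 \<le> n" shows "2^(n-1) \<le> card (SF a n)"
  using assms(2)
proof (induction n)
  case 0 then show ?case by simp
next
  case (Suc n)
  show ?case
  proof (cases "n = 0")
    case True
    then have "(1, []) \<in> SF a (Suc n)" unfolding SF_def using assms by auto
    then have "card (SF a (Suc n)) \<ge> 1"
      using SF_finite[OF assms(1)] by (metis One_nat_def Suc_leI card_gt_0_iff empty_iff)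
    then show ?thesis using True by simp
  next
    case False
    then have IH: "2^(n-1) \<le> card (SF a n)" using Suc by simp
    define f1 where "f1 = (\<lambda>(p::nat, ls::nat list). (p, ls @ [p-1+a]))"
    define f2 where "f2 = (\<lambda>(p::nat, ls::nat list). (p+1, ls))"
    have s1: "f1 ` SF a n \<subseteq> SF a (Suc n)"
    proof
      fix z assume "z \<in> f1 ` SF a n"
      then obtain p ls where z: "z = (p, ls @ [p-1+a])" and pl: "(p, ls) \<in> SF a n"
        unfolding f1_def by auto
      from pl have "1 \<le> p" "p \<le> n" "length ls = n - p" "sorted ls" "set ls \<subseteq> {a..p-1+a}"
        unfolding SF_def by auto
      then show "z \<in> SF a (Suc n)" unfolding z SF_def using assms
        by (auto simp: sorted_append)
    qed
    have s2: "f2 ` SF a n \<subseteq> SF a (Suc n)"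
    proof
      fix z assume "z \<in> f2 ` SF a n"
      then obtain p ls where z: "z = (p+1, ls)" and pl: "(p, ls) \<in> SF a n"
        unfolding f2_def by auto
      from pl have "1 \<le> p" "p \<le> n" "length ls = n - p" "sorted ls" "set ls \<subseteq> {a..p-1+a}"
        unfolding SF_def by auto
      then show "z \<in> SF a (Suc n)" unfolding z SF_def using assms by (force simp: subset_iff)
    qed
    have disj: "f1 ` SF a n \<inter> f2 ` SF a n = {}"
    proof (rule ccontr)
      assume "f1 ` SF a n \<inter> f2 ` SF a n \<noteq> {}"
      then obtain z where z1: "z \<in> f1 ` SF a n" and z2: "z \<in> f2 ` SF a n" by blast
      from z1 obtain p ls where "(p, ls) \<in> SF a n" and e1: "z = (p, ls @ [p-1+a])"
        unfolding f1_def by auto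
      from z2 obtain p' ls' where "(p', ls') \<in> SF a n" and e2: "z = (p'+1, ls')"
        unfolding f2_def by auto
      have eq: "(p, ls @ [p-1+a]) = (p'+1, ls')" using e1 e2 by simp
      from \<open>(p', ls') \<in> SF a n\<close> have "set ls' \<subseteq> {a..p'-1+a}" "1 \<le> p'" unfolding SF_def by auto
      moreover have "p-1+a \<in> set ls'" using eq by auto
      ultimately show False using eq by auto
    qed
    have i1: "inj_on f1 (SF a n)" unfolding f1_def by (auto simp: inj_on_def)
    have i2: "inj_on f2 (SF a n)" unfolding f2_def by (auto simp: inj_on_def)
    have "card (f1 ` SF a n \<union> f2 ` SF a n) = card (SF a n) + card (SF a n)"
      using card_Un_disjoint[OF finite_imageI[OF SF_finite[OF assms(1)]]
          finite_imageI[OF SF_finite[OF assms(1)]] disj]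
        card_image[OF i1] card_image[OF i2] by simp
    moreover have "card (f1 ` SF a n \<union> f2 ` SF a n) \<le> card (SF a (Suc n))"
      using s1 s2 SF_finite[OF assms(1)] by (intro card_mono) auto
    ultimately have "2 * card (SF a n) \<le> card (SF a (Suc n))" by simp
    moreover have "(2::nat)^(Suc n - 1) = 2 * 2^(n-1)" using False by (cases n) auto
    ultimately show ?thesis using IH by simp
  qed
qed

lemma mult_cmp:
  fixes K u l e :: nat
  assumes "0 < e" "e < K"
  shows "(K*u < K*l + e) = (u \<le> l)" "K*u \<noteq> K*l + e"
proof -
  have A: "K*u < K*l + e" if "u \<le> l"
  proof -
    have "K*u \<le> K*l" using that by simp
    then show ?thesis using assms by linarith
  qed
  have B: "K*l + e < K*u" if "\<not> u \<le> l"
  proof -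
    have "l + 1 \<le> u" using that by simp
    then have "K*(l+1) \<le> K*u" by (rule mult_le_mono2)
    then show ?thesis using assms by (simp add: algebra_simps)
  qed
  show "(K*u < K*l + e) = (u \<le> l)" using A B by fastforce
  show "K*u \<noteq> K*l + e" using A B by (cases "u \<le> l") auto
qed


lemma F_count:
  fixes n :: nat
  assumes her: "hereditary P" and inP: "(N,E) \<in> P" and cl: "clean da E N X Y M al be ga ep"
    and gne: "ga \<noteq> ep" and n1: "1 \<le> n" and Mb: "(n+1)*(n+1) \<le> M"
  shows "2^(n-1) \<le> card (slice P n)"
proof -
  define a where "a = (if al \<noteq> ga then 1 else 0::nat)"
  have a1: "a \<le> 1" unfolding a_def by simp
  define tr where "tr = (\<lambda>(p::nat, ls::nat list). (p, if da then ls else rev ls))"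
  define F where "F = tr ` SF a n"
  have trinj: "inj_on tr (SF a n)" unfolding tr_def by (cases da) (auto simp: inj_on_def)
  have Ffin: "finite F" unfolding F_def using SF_finite[OF a1] by simp
  have Fcard: "2^(n-1) \<le> card F" unfolding F_def using card_image[OF trinj] SF_card[OF a1 n1] by simp
  have Fmem: "1 \<le> p \<and> p \<le> n \<and> length ls = n - p \<and> set ls \<subseteq> {a..p-1+a} \<and>
      (\<forall>j j'. j < j' \<longrightarrow> j' < length ls \<longrightarrow> (if da then ls!j \<le> ls!j' else ls!j' \<le> ls!j))"
    if pF: "(p, ls) \<in> F" for p ls
  proof -
    obtain z where z: "z \<in> SF a n" "(p, ls) = tr z" using pF unfolding F_def by blast
    obtain p0 ls0 where z0: "z = (p0, ls0)" by (cases z)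
    have l0: "(p, ls0) \<in> SF a n" "ls = (if da then ls0 else rev ls0)"
      using z z0 unfolding tr_def by auto
    then have b: "1 \<le> p" "p \<le> n" "length ls0 = n - p" "sorted ls0" "set ls0 \<subseteq> {a..p-1+a}"
      unfolding SF_def by auto
    have m: "(if da then ls!j \<le> ls!j' else ls!j' \<le> ls!j)" if "j < j'" "j' < length ls" for j j'
    proof (cases da)
      case True
      then show ?thesis using l0 b that by (simp add: sorted_nth_mono)
    next
      case False
      then have "ls ! j = ls0 ! (length ls0 - Suc j)" "ls ! j' = ls0 ! (length ls0 - Suc j')"
        using l0 that by (simp_all add: rev_nth)
      moreover have "ls0 ! (length ls0 - Suc j') \<le> ls0 ! (length ls0 - Suc j)"
        using b(4) that l0 False by (intro sorted_nth_mono) auto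
      ultimately show ?thesis using False by simp
    qed
    show ?thesis using b l0 m by auto
  qed
  define K where "K = n + 1"
  have Kp: "0 < K" unfolding K_def by simp
  define bx where "bx = (\<lambda>i::nat. K * i)"
  define byf where "byf = (\<lambda>(p::nat) (ls::nat list) (i::nat). K * (ls!(i-p-1)) + (if da then i-p else n-(i-p)))"
  define emb where "emb = (\<lambda>(p::nat, ls::nat list). (\<lambda>i. if i \<le> p then X (bx i) else Y (byf p ls i)))"
  define R where "R = (\<lambda>(p::nat) (ls::nat list) (u::nat) (v::nat).
      if v \<le> p then al else if p < u then be else if u \<le> ls!(v-p-1) then ga else ep)"
  have real: "strict_mono_on {1..n} (emb (p, ls)) \<and> emb (p, ls) ` {1..n} \<subseteq> {1..N} \<and>
     (\<forall>u v. 1 \<le> u \<longrightarrow> u < v \<longrightarrow> v \<le> n \<longrightarrow> ({emb (p,ls) u, emb (p,ls) v} \<in> E \<longleftrightarrow> R p ls u v))"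
    if pl: "(p, ls) \<in> F" for p ls
  proof -
    note b = Fmem[OF pl]
    have lsb: "ls!(i-p-1) \<le> p" "a \<le> ls!(i-p-1)" if "i \<in> {p+1..n}" for i
    proof -
      have "i-p-1 < length ls" using that b by auto
      then have "ls!(i-p-1) \<in> {a..p-1+a}" using b by (auto simp: subset_iff)
      then show "ls!(i-p-1) \<le> p" "a \<le> ls!(i-p-1)" using a1 b by auto
    qed
    have eb: "0 < (if da then i-p else n-(i-p))" "(if da then i-p else n-(i-p)) < K"
      "(if da then i-p else n-(i-p)) \<le> n" if "i \<in> {p+1..n}" for i
      using that b unfolding K_def by auto
    have bxr: "\<forall>i\<in>{1..p}. bx i \<in> {1..M}"
    proof
      fix i assume i: "i \<in> {1..p}"
      have "K * i \<le> K * n" using i b by (intro mult_le_mono2) auto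
      then show "bx i \<in> {1..M}" using i Mb unfolding bx_def K_def by auto
    qed
    have byr: "\<forall>i\<in>{p+1..n}. byf p ls i \<in> {1..M}"
    proof
      fix i assume i: "i \<in> {p+1..n}"
      have A: "K * (ls!(i-p-1)) \<le> K * n" using lsb[OF i] b by (intro mult_le_mono2) auto
      have Be: "byf p ls i = K * (ls!(i-p-1)) + (if da then i-p else n-(i-p))" by (simp add: byf_def)
      have "byf p ls i \<le> K * n + n" using A Be eb(3)[OF i] by linarith
      also have "\<dots> \<le> M" using Mb unfolding K_def by (simp add: algebra_simps)
      finally show "byf p ls i \<in> {1..M}" using eb(1)[OF i] Be by simp
    qed
    have bxm: "\<forall>i\<in>{1..p}. \<forall>j\<in>{1..p}. i < j \<longrightarrow> bx i < bx j"
      unfolding bx_def using Kp by simp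
    have bym: "\<forall>i\<in>{p+1..n}. \<forall>j\<in>{p+1..n}. i < j \<longrightarrow>
        (if da then byf p ls i < byf p ls j else byf p ls j < byf p ls i)"
    proof (intro ballI impI)
      fix i j assume i: "i \<in> {p+1..n}" and j: "j \<in> {p+1..n}" and ij: "i < j"
      have "i-p-1 < j-p-1" "j-p-1 < length ls" using i j ij b by auto
      then have m: "if da then ls!(i-p-1) \<le> ls!(j-p-1) else ls!(j-p-1) \<le> ls!(i-p-1)"
        using b by blast
      show "if da then byf p ls i < byf p ls j else byf p ls j < byf p ls i"
      proof (cases da)
        case True
        have A: "K * ls!(i-p-1) \<le> K * ls!(j-p-1)" using m True by (intro mult_le_mono2) simp
        have e: "byf p ls i = K * ls!(i-p-1) + (i-p)" "byf p ls j = K * ls!(j-p-1) + (j-p)"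
          using True by (simp_all add: byf_def)
        have "i - p < j - p" using i j ij by auto
        then have "byf p ls i < byf p ls j" using A e by linarith
        then show ?thesis using True by simp
      next
        case False
        have A: "K * ls!(j-p-1) \<le> K * ls!(i-p-1)" using m False by (intro mult_le_mono2) simp
        have e: "byf p ls i = K * ls!(i-p-1) + (n-(i-p))" "byf p ls j = K * ls!(j-p-1) + (n-(j-p))"
          using False by (simp_all add: byf_def)
        have "n - (j - p) < n - (i - p)" using i j ij by auto
        then have "byf p ls j < byf p ls i" using A e by linarith
        then show ?thesis using False by simp
      qed
    qed
    have fdef: "emb (p, ls) = (\<lambda>i. if i \<le> p then X (bx i) else Y (byf p ls i))"
      unfolding emb_def by simp
    note rr = realize[OF cl bxr byr bxm bym fdef]
    have cross: "(bx u < byf p ls v) = (u \<le> ls!(v-p-1))" "bx u \<noteq> byf p ls v"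
      if "v \<in> {p+1..n}" for u v
      unfolding bx_def byf_def using mult_cmp[OF eb(1,2)[OF that]] by auto
    show ?thesis
    proof (intro conjI allI impI)
      show "strict_mono_on {1..n} (emb (p, ls))" by (rule rr(1))
      show "emb (p, ls) ` {1..n} \<subseteq> {1..N}" by (rule rr(2))
      fix u v assume uv: "1 \<le> u" "u < v" "v \<le> n"
      show "{emb (p,ls) u, emb (p,ls) v} \<in> E \<longleftrightarrow> R p ls u v"
      proof (cases "v \<le> p \<or> p < u")
        case True
        then show ?thesis using rr(3)[OF uv] unfolding R_def by auto
      next
        case False
        then have v: "v \<in> {p+1..n}" using uv by auto
        show ?thesis using rr(3)[OF uv] False cross[OF v, of u] unfolding R_def
          by (auto simp: not_less_iff_gr_or_eq)
      qed
    qed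
  qed
  have Req: "R p ls u v = R p' ls' u v"
    if pl: "(p, ls) \<in> F" and pl': "(p', ls') \<in> F"
      and eq: "induced_ordered E (emb (p, ls)) n = induced_ordered E (emb (p', ls')) n"
      and uv: "1 \<le> u" "u < v" "v \<le> n" for p ls p' ls' u v
  proof -
    have r1: "({emb (p,ls) u, emb (p,ls) v} \<in> E) = R p ls u v"
      using real[OF pl] uv by blast
    have r2: "({emb (p',ls') u, emb (p',ls') v} \<in> E) = R p' ls' u v"
      using real[OF pl'] uv by blast
    have "({emb (p,ls) u, emb (p,ls) v} \<in> E) = ({emb (p',ls') u, emb (p',ls') v} \<in> E)"
      using ind_eq_edge[OF eq, of u v] uv by simp
    then show ?thesis using r1 r2 by simp
  qed
  have noless: False
    if pl: "(p, ls) \<in> F" and pl': "(p', ls') \<in> F"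
      and eqR: "\<forall>u v. 1 \<le> u \<longrightarrow> u < v \<longrightarrow> v \<le> n \<longrightarrow> R p ls u v = R p' ls' u v"
      and lt: "p < p'" for p ls p' ls'
  proof -
    note b = Fmem[OF pl] and b' = Fmem[OF pl']
    have idx: "p'-p-1 < length ls" using b b' lt by auto
    then have lv: "ls!(p'-p-1) \<in> {a..p-1+a}" using b by (auto simp: subset_iff)
    show False
    proof (cases "al \<noteq> ga")
      case True
      then have "a = 1" unfolding a_def by simp
      then have "1 \<le> ls!(p'-p-1)" using lv by simp
      then have "R p ls 1 p' = ga" using b lt unfolding R_def by auto
      moreover have "R p' ls' 1 p' = al" unfolding R_def by simp
      moreover have "R p ls 1 p' = R p' ls' 1 p'" using eqR b b' lt by auto
      ultimately show False using True by simp
    next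
      case False
      then have "a = 0" unfolding a_def by simp
      then have "\<not> p \<le> ls!(p'-p-1)" using lv b by auto
      then have "R p ls p p' = ep" using b lt unfolding R_def by auto
      moreover have "R p' ls' p p' = al" using lt unfolding R_def by simp
      moreover have "R p ls p p' = R p' ls' p p'" using eqR b b' lt by auto
      ultimately show False using False gne by simp
    qed
  qed
  show ?thesis
  proof (rule count_lemma[OF her Ffin Fcard])
    fix z assume "z \<in> F"
    then obtain p ls where z: "z = (p, ls)" and pl: "(p, ls) \<in> F" by (cases z) auto
    show "(n, induced_ordered E (emb z) n) \<in> P"
      unfolding z using real[OF pl] by (intro ind_in_P[OF her inP]) auto
  next
    show "inj_on (\<lambda>z. induced_ordered E (emb z) n) F"
    proof (rule inj_onI)
      fix z z' assume zF: "z \<in> F" and zF': "z' \<in> F"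
        and eq: "induced_ordered E (emb z) n = induced_ordered E (emb z') n"
      obtain p ls where z: "z = (p, ls)" by (cases z)
      obtain p' ls' where z': "z' = (p', ls')" by (cases z')
      have pl: "(p, ls) \<in> F" and pl': "(p', ls') \<in> F" using zF zF' z z' by auto
      have eqR: "\<forall>u v. 1 \<le> u \<longrightarrow> u < v \<longrightarrow> v \<le> n \<longrightarrow> R p ls u v = R p' ls' u v"
        using Req[OF pl pl'] eq z z' by simp
      have eqR': "\<forall>u v. 1 \<le> u \<longrightarrow> u < v \<longrightarrow> v \<le> n \<longrightarrow> R p' ls' u v = R p ls u v"
        using eqR by auto
      have pp: "p = p'"
        using noless[OF pl pl' eqR] noless[OF pl' pl eqR'] by (cases "p < p'"; cases "p' < p") auto
      note b = Fmem[OF pl] and b' = Fmem[OF pl']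
      have "ls = ls'"
      proof (rule nth_equalityI)
        show "length ls = length ls'" using b b' pp by simp
        fix j assume j: "j < length ls"
        have v: "p + j + 1 \<le> n" "p < p + j + 1" using j b by auto
        have m1: "ls!j \<in> set ls" "ls'!j \<in> set ls'" using j b b' pp by auto
        then have m2: "ls!j \<in> {a..p-1+a}" "ls'!j \<in> {a..p-1+a}" using b b' pp by auto
        have vb: "ls!j \<le> p" "ls'!j \<le> p" "a \<le> ls!j" "a \<le> ls'!j" using m2 a1 b by auto
        show "ls!j = ls'!j"
        proof (rule ccontr)
          assume ne: "ls!j \<noteq> ls'!j"
          have gen: False if "(q, ms) \<in> F" "(q, ms') \<in> F" "ms!j < ms'!j" "ms'!j \<le> q"
            "q + j + 1 \<le> n" "\<forall>u v. 1 \<le> u \<longrightarrow> u < v \<longrightarrow> v \<le> n \<longrightarrow> R q ms u v = R q ms' u v"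
            for q ms ms'
          proof -
            have "R q ms (ms'!j) (q+j+1) = R q ms' (ms'!j) (q+j+1)"
              using that by auto
            then show False using that gne unfolding R_def by auto
          qed
          show False
          proof (cases "ls!j < ls'!j")
            case True
            show False by (rule gen[of p ls ls']) (use pl pl' pp True vb v eqR in auto)
          next
            case False
            then have "ls'!j < ls!j" using ne by simp
            then show False by (intro gen[of p ls' ls]) (use pl pl' pp vb v eqR' in auto)
          qed
        qed
      qed
      then show "z = z'" using z z' pp by simp
    qed
  qed
qed


definition cnt :: "nat set \<Rightarrow> nat \<Rightarrow> nat" where "cnt U i = card (U \<inter> {1..i})"

lemma cnt_mono: "i \<le> j \<Longrightarrow> cnt U i \<le> cnt U j"
  unfolding cnt_def by (intro card_mono) auto

lemma cnt_Suc: "cnt U (Suc i) = cnt U i + (if Suc i \<in> U then 1 else 0)"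
proof -
  have e: "U \<inter> {1..Suc i} = (if Suc i \<in> U then insert (Suc i) (U \<inter> {1..i}) else U \<inter> {1..i})"
    by (auto simp: le_Suc_eq)
  show ?thesis unfolding cnt_def by (subst e) auto
qed

lemma cnt_0: "cnt U 0 = 0" unfolding cnt_def by simp

lemma cnt_strict: "i < j \<Longrightarrow> j \<in> U \<Longrightarrow> cnt U i < cnt U j"
proof -
  assume ij: "i < j" "j \<in> U"
  have "cnt U i \<le> cnt U (j - 1)" using ij by (intro cnt_mono) auto
  moreover have "cnt U j = cnt U (j-1) + 1" using cnt_Suc[of U "j-1"] ij by (cases j) auto
  ultimately show ?thesis by simp
qed

lemma cnt_pos: "1 \<le> i \<Longrightarrow> i \<in> U \<Longrightarrow> 1 \<le> cnt U i"
  using cnt_strict[of 0 i U] cnt_0[of U] by simp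

lemma cnt_ivt:
  assumes "a < b" "cnt U a < m" "m \<le> cnt U b"
  shows "\<exists>j. a < j \<and> j \<le> b \<and> j \<in> U \<and> cnt U j = m"
  using assms
proof (induction b)
  case 0 then show ?case by simp
next
  case (Suc b)
  show ?case
  proof (cases "a < b \<and> m \<le> cnt U b")
    case True
    then obtain j where "a < j \<and> j \<le> b \<and> j \<in> U \<and> cnt U j = m" using Suc.IH Suc.prems by blast
    then show ?thesis by (intro exI[of _ j]) auto
  next
    case False
    have "cnt U b < m"
    proof (cases "a = b")
      case True then show ?thesis using Suc.prems by simp
    next
      case False
      then show ?thesis using \<open>\<not> (a < b \<and> m \<le> cnt U b)\<close> Suc.prems by auto
    qed
    then have "Suc b \<in> U \<and> cnt U (Suc b) = m" using cnt_Suc[of U b] Suc.prems by (auto split: if_splits)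
    then show ?thesis using Suc.prems by (intro exI[of _ "Suc b"]) auto
  qed
qed

lemma cnt_le_card: "finite U \<Longrightarrow> cnt U i \<le> card U"
  unfolding cnt_def by (intro card_mono) auto

lemma cnt_full: "U \<subseteq> {1..n} \<Longrightarrow> cnt U n = card U"
  unfolding cnt_def by (simp add: Int_absorb2)

lemma cnt_split:
  assumes "U \<subseteq> {1..n}" "p \<le> n"
  shows "card U = cnt U p + card (U \<inter> {p+1..n})"
proof -
  have "U = (U \<inter> {1..p}) \<union> (U \<inter> {p+1..n})" using assms by auto
  moreover have "(U \<inter> {1..p}) \<inter> (U \<inter> {p+1..n}) = {}" by auto
  moreover have "finite (U \<inter> {1..p})" "finite (U \<inter> {p+1..n})" by auto
  ultimately have "card U = card (U \<inter> {1..p}) + card (U \<inter> {p+1..n})"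
    by (metis card_Un_disjoint)
  then show ?thesis unfolding cnt_def by simp
qed

lemma lin_uniq:
  fixes K a b e e' :: nat
  assumes "e < K" "e' < K" "K*a + e = K*b + e'"
  shows "a = b" "e = e'"
proof -
  have K0: "0 < K" using assms(1) by simp
  have d1: "(K*a + e) div K = a" using K0 assms(1) by simp
  have d2: "(K*b + e') div K = b" using K0 assms(2) by simp
  show "a = b" using d1 d2 assms(3) by metis
  have m1: "(K*a + e) mod K = e" using K0 assms(1) by simp
  have m2: "(K*b + e') mod K = e'" using K0 assms(2) by simp
  show "e = e'" using m1 m2 assms(3) by metis
qed


definition bxM :: "nat \<Rightarrow> nat set \<Rightarrow> nat \<Rightarrow> nat" where
  "bxM K U i = K * cnt U i + (if i \<in> U then 0 else i)"
definition byM :: "bool \<Rightarrow> nat \<Rightarrow> nat set \<Rightarrow> nat \<Rightarrow> nat \<Rightarrow> nat" where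
  "byM da K U r i = (if da then bxM K U i - K*r else K*(2*r+1) - bxM K U i)"
definition tieM :: "bool \<Rightarrow> nat set \<Rightarrow> nat \<Rightarrow> nat \<Rightarrow> nat \<Rightarrow> bool" where
  "tieM da U r u v \<longleftrightarrow> u \<in> U \<and> v \<in> U \<and>
     (if da then cnt U v = cnt U u + r else cnt U u + cnt U v = 2*r+1)"
definition validM :: "nat \<Rightarrow> nat \<Rightarrow> nat set \<Rightarrow> bool" where
  "validM n p U \<longleftrightarrow> p \<le> n \<and> U \<subseteq> {1..n} \<and> cnt U p = card (U \<inter> {p+1..n})"

lemma bxM_mono:
  assumes "n < K" "1 \<le> i" "i < j" "j \<le> n"
  shows "bxM K U i < bxM K U j"
proof (cases "cnt U i = cnt U j")
  case True
  then have "j \<notin> U" using cnt_strict[of i j U] assms by auto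
  then show ?thesis using True assms unfolding bxM_def by auto
next
  case False
  then have lt: "cnt U i + 1 \<le> cnt U j" using cnt_mono[of i j U] assms by auto
  have "bxM K U i < K * cnt U i + K" using assms unfolding bxM_def by auto
  also have "\<dots> = K * (cnt U i + 1)" by simp
  also have "\<dots> \<le> K * cnt U j" using lt by (rule mult_le_mono2)
  also have "\<dots> \<le> bxM K U j" unfolding bxM_def by simp
  finally show ?thesis .
qed

lemma bxM_form:
  assumes "n < K" "i \<le> n"
  shows "bxM K U i = K * cnt U i + (if i \<in> U then 0 else i)" "(if i \<in> U then 0 else i) < K"
    "K * cnt U i \<le> bxM K U i" "bxM K U i < K * (cnt U i + 1)"
  using assms unfolding bxM_def by auto

lemma M_real:
  fixes n p r K :: nat
  assumes cl: "clean da E N X Y M al be g g" and tie: "\<forall>a\<in>{1..M}. ({X a, Y a} \<in> E) = mu"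
    and vM: "validM n p U" and rdef: "r = cnt U p" and Kdef: "K = 2*n+2" and Mb: "K*(n+1) \<le> M"
    and fdef: "f = (\<lambda>i. if i \<le> p then X (bxM K U i) else Y (byM da K U r i))"
  shows "strict_mono_on {1..n} f" "f ` {1..n} \<subseteq> {1..N}"
    "\<And>u v. 1 \<le> u \<Longrightarrow> u < v \<Longrightarrow> v \<le> n \<Longrightarrow> ({f u, f v} \<in> E \<longleftrightarrow>
       (if v \<le> p then al else if p < u then be else if tieM da U r u v then mu else g))"
proof -
  have pn: "p \<le> n" and Usub: "U \<subseteq> {1..n}" and bal: "cnt U p = card (U \<inter> {p+1..n})"
    using vM unfolding validM_def by auto
  have cardU: "card U = 2*r" using cnt_split[OF Usub pn] bal rdef by simp
  have finU: "finite U" using Usub finite_subset by blast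
  have cardn: "card U \<le> n" using card_mono[OF _ Usub] by simp
  have cle: "cnt U i \<le> 2*r" for i using cnt_le_card[OF finU, of i] cardU by simp
  have cp: "cnt U i \<le> r" if "i \<le> p" for i using cnt_mono[OF that, of U] rdef by simp
  have cg: "r \<le> cnt U i" if "p \<le> i" for i using cnt_mono[OF that, of U] rdef by simp
  have nK: "n < K" using Kdef by simp
  have bxup: "bxM K U i < K*(2*r+1)" if "i \<le> n" for i
  proof -
    have "bxM K U i < K * (cnt U i + 1)" using bxM_form(4)[OF nK that, of U] by simp
    also have "\<dots> \<le> K*(2*r+1)" using cle[of i] by (intro mult_le_mono2) simp
    finally show ?thesis .
  qed
  have KM: "K*(2*r+1) \<le> M"
  proof -
    have "K*(2*r+1) \<le> K*(n+1)" using cardn cardU by (intro mult_le_mono2) simp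
    then show ?thesis using Mb by (rule le_trans)
  qed
  have bx1: "1 \<le> bxM K U i" if "1 \<le> i" "i \<le> n" for i
  proof (cases "i \<in> U")
    case True
    then have "1 \<le> cnt U i" using cnt_pos that by simp
    then have "K \<le> K * cnt U i" by simp
    then show ?thesis using True Kdef unfolding bxM_def by simp
  next
    case False then show ?thesis using that unfolding bxM_def by simp
  qed
  have bxKr: "K*r \<le> bxM K U i" if "p \<le> i" "i \<le> n" for i
  proof -
    have "K*r \<le> K * cnt U i" using cg[OF that(1)] by (rule mult_le_mono2)
    then show ?thesis using bxM_form(3)[OF nK that(2), of U] by (rule le_trans)
  qed
  have bxr: "\<forall>i\<in>{1..p}. bxM K U i \<in> {1..M}"
  proof
    fix i assume i: "i \<in> {1..p}"
    then have "bxM K U i < K*(2*r+1)" using bxup pn by auto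
    then show "bxM K U i \<in> {1..M}" using KM bx1 i pn by auto
  qed
  have byr: "\<forall>i\<in>{p+1..n}. byM da K U r i \<in> {1..M}"
  proof
    fix i assume i: "i \<in> {p+1..n}"
    then have i': "p \<le> i" "i \<le> n" "1 \<le> i" by auto
    show "byM da K U r i \<in> {1..M}"
    proof (cases da)
      case True
      have "1 \<le> bxM K U i - K*r"
      proof (cases "i \<in> U")
        case True
        then have "cnt U p < cnt U i" using cnt_strict[of p i U] i by auto
        then have "r + 1 \<le> cnt U i" using rdef by simp
        then have "K*(r+1) \<le> K * cnt U i" by (rule mult_le_mono2)
        moreover have "K*(r+1) = K*r + K" by simp
        ultimately have "K*r + K \<le> bxM K U i" using bxM_form(3)[OF nK i'(2), of U] by linarith
        then show ?thesis using Kdef by simp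
      next
        case False
        then have "bxM K U i = K * cnt U i + i" unfolding bxM_def by simp
        moreover have "K*r \<le> K * cnt U i" using cg[OF i'(1)] by (rule mult_le_mono2)
        ultimately show ?thesis using i' by linarith
      qed
      moreover have "bxM K U i - K*r \<le> M" using bxup[OF i'(2)] KM by simp
      ultimately show ?thesis using True unfolding byM_def by simp
    next
      case False
      then show ?thesis using bxup[OF i'(2)] KM unfolding byM_def by auto
    qed
  qed
  have bxm: "\<forall>i\<in>{1..p}. \<forall>j\<in>{1..p}. i < j \<longrightarrow> bxM K U i < bxM K U j"
    using bxM_mono[OF nK] pn by auto
  have bym: "\<forall>i\<in>{p+1..n}. \<forall>j\<in>{p+1..n}. i < j \<longrightarrow>
      (if da then byM da K U r i < byM da K U r j else byM da K U r j < byM da K U r i)"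
  proof (intro ballI impI)
    fix i j assume i: "i \<in> {p+1..n}" and j: "j \<in> {p+1..n}" and ij: "i < j"
    have lt: "bxM K U i < bxM K U j" using bxM_mono[OF nK] i j ij by auto
    show "if da then byM da K U r i < byM da K U r j else byM da K U r j < byM da K U r i"
    proof (cases da)
      case True
      have "K*r \<le> bxM K U i" using bxKr i by auto
      then show ?thesis using True lt unfolding byM_def by simp
    next
      case False
      have "bxM K U j < K*(2*r+1)" using bxup j by auto
      then show ?thesis using False lt unfolding byM_def by simp
    qed
  qed
  note rr = realize[OF cl bxr byr bxm bym fdef]
  show "strict_mono_on {1..n} f" by (rule rr(1))
  show "f ` {1..n} \<subseteq> {1..N}" by (rule rr(2))
  fix u v assume uv: "1 \<le> u" "u < v" "v \<le> n"
  show "{f u, f v} \<in> E \<longleftrightarrow>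
       (if v \<le> p then al else if p < u then be else if tieM da U r u v then mu else g)"
  proof (cases "v \<le> p \<or> p < u")
    case True
    then show ?thesis using rr(3)[OF uv] by auto
  next
    case False
    then have up: "u \<le> p" and vp: "p < v" by auto
    have bum: "bxM K U u \<in> {1..M}" using bxr up uv by auto
    have eq: "(bxM K U u = byM da K U r v) = tieM da U r u v"
    proof -
      define eu where "eu = (if u \<in> U then 0 else u)"
      define ev where "ev = (if v \<in> U then 0 else v)"
      have fu: "bxM K U u = K * cnt U u + eu" "eu < K"
        using bxM_form[OF nK, of u U] uv unfolding eu_def by auto
      have fv: "bxM K U v = K * cnt U v + ev" "ev < K"
        using bxM_form[OF nK, of v U] uv unfolding ev_def by auto
      have euv: "(eu = ev) = (u \<in> U \<and> v \<in> U)" using uv unfolding eu_def ev_def by auto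
      have euv2: "(eu + ev = 0) = (u \<in> U \<and> v \<in> U)" using uv unfolding eu_def ev_def by auto
      show ?thesis
      proof (cases da)
        case True
        have "K*r \<le> bxM K U v" using bxKr vp uv by auto
        then have b1: "(bxM K U u = byM da K U r v) = (bxM K U u + K*r = bxM K U v)"
          using True unfolding byM_def by auto
        have b2: "bxM K U u + K*r = K*(cnt U u + r) + eu" using fu(1) by (simp add: algebra_simps)
        have "(bxM K U u = byM da K U r v) = (K*(cnt U u + r) + eu = K * cnt U v + ev)"
          using b1 b2 fv(1) by simp
        also have "\<dots> = tieM da U r u v"
        proof
          assume h: "K*(cnt U u + r) + eu = K * cnt U v + ev"
          note lu = lin_uniq[OF fu(2) fv(2) h]
          then show "tieM da U r u v" using True euv unfolding tieM_def by auto
        next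
          assume "tieM da U r u v"
          then show "K*(cnt U u + r) + eu = K * cnt U v + ev"
            using True euv unfolding tieM_def eu_def ev_def by simp
        qed
        finally show ?thesis .
      next
        case False
        have bv: "bxM K U v < K*(2*r+1)" using bxup uv by auto
        have sK: "eu + ev < K" using uv Kdef unfolding eu_def ev_def by auto
        have b1: "(bxM K U u = byM da K U r v) = (bxM K U u + bxM K U v = K*(2*r+1))"
          using False bv unfolding byM_def by auto
        have b2: "bxM K U u + bxM K U v = K*(cnt U u + cnt U v) + (eu + ev)"
          using fu(1) fv(1) by (simp add: algebra_simps)
        have "(bxM K U u = byM da K U r v) = (K*(cnt U u + cnt U v) + (eu + ev) = K*(2*r+1) + 0)"
          using b1 b2 by simp
        also have "\<dots> = tieM da U r u v"
        proof
          assume h: "K*(cnt U u + cnt U v) + (eu + ev) = K*(2*r+1) + 0"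
          note lu = lin_uniq[OF sK _ h]
          then show "tieM da U r u v" using False euv2 Kdef unfolding tieM_def by auto
        next
          assume "tieM da U r u v"
          then show "K*(cnt U u + cnt U v) + (eu + ev) = K*(2*r+1) + 0"
            using False euv2 unfolding tieM_def by simp
        qed
        finally show ?thesis .
      qed
    qed
    have "({f u, f v} \<in> E) = (if bxM K U u < byM da K U r v then g else if byM da K U r v < bxM K U u then g
        else {X (bxM K U u), Y (byM da K U r v)} \<in> E)" using rr(3)[OF uv] up vp by auto
    also have "\<dots> = (if tieM da U r u v then mu else g)"
      using eq tie bum by (auto simp: not_less_iff_gr_or_eq)
    finally show ?thesis using up vp by auto
  qed
qed


lemma partner:
  assumes vM: "validM n p U" and rdef: "r = cnt U p" and uU: "u \<in> U"
  shows "u \<le> p \<Longrightarrow> \<exists>v. p < v \<and> v \<le> n \<and> tieM da U r u v"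
    "p < u \<Longrightarrow> \<exists>w. 1 \<le> w \<and> w \<le> p \<and> tieM da U r w u"
proof -
  have pn: "p \<le> n" and Usub: "U \<subseteq> {1..n}" and bal: "cnt U p = card (U \<inter> {p+1..n})"
    using vM unfolding validM_def by auto
  have cardU: "card U = 2*r" using cnt_split[OF Usub pn] bal rdef by simp
  have cn: "cnt U n = 2*r" using cnt_full[OF Usub] cardU by simp
  have u1: "1 \<le> u" "u \<le> n" using uU Usub by auto
  have cu1: "1 \<le> cnt U u" using cnt_pos[OF u1(1) uU] .
  have cun: "cnt U u \<le> 2*r" using cnt_mono[OF u1(2), of U] cn by simp
  {
    assume up: "u \<le> p"
    have cur: "cnt U u \<le> r" using cnt_mono[OF up, of U] rdef by simp
    define m where "m = (if da then cnt U u + r else 2*r+1 - cnt U u)"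
    have m1: "cnt U p < m" "m \<le> cnt U n" using cu1 cur rdef cn unfolding m_def by auto
    then have "p < n" using pn by (cases "p = n") auto
    then obtain j where j: "p < j" "j \<le> n" "j \<in> U" "cnt U j = m" using cnt_ivt[OF _ m1] by blast
    have "tieM da U r u j" unfolding tieM_def using j uU cu1 cur unfolding m_def by auto
    then show "\<exists>v. p < v \<and> v \<le> n \<and> tieM da U r u v" using j by blast
  }
  {
    assume pu: "p < u"
    have cur: "r + 1 \<le> cnt U u" using cnt_strict[OF pu uU] rdef by simp
    define m where "m = (if da then cnt U u - r else 2*r+1 - cnt U u)"
    have m1: "cnt U 0 < m" "m \<le> cnt U p" using cun cur rdef cnt_0[of U] unfolding m_def by auto
    then have "0 < p" by (cases "p = 0") auto
    then obtain j where j: "0 < j" "j \<le> p" "j \<in> U" "cnt U j = m" using cnt_ivt[OF _ m1] by blast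
    have "tieM da U r j u" unfolding tieM_def using j uU cun cur unfolding m_def by auto
    then show "\<exists>w. 1 \<le> w \<and> w \<le> p \<and> tieM da U r w u" using j by (intro exI[of _ j]) auto
  }
qed

lemma card_diff_split:
  assumes "S \<subseteq> {1..n}" "p \<le> n"
  shows "card ({p+1..n} - S) + card (S \<inter> {p+1..n}) = n - p"
proof -
  have "card ({p+1..n} - S) = card {p+1..n} - card ({p+1..n} \<inter> S)"
    by (rule card_Diff_subset_Int) auto
  moreover have "card ({p+1..n} \<inter> S) \<le> card {p+1..n}" by (intro card_mono) auto
  moreover have "{p+1..n} \<inter> S = S \<inter> {p+1..n}" by auto
  ultimately show ?thesis by simp
qed


lemma M_count:
  fixes n :: nat
  assumes her: "hereditary P" and inP: "(N,E) \<in> P" and cl: "clean da E N X Y M al be g g"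
    and tie: "\<forall>a\<in>{1..M}. ({X a, Y a} \<in> E) = mu" and mug: "mu \<noteq> g"
    and n1: "1 \<le> n" and Mb: "(2*n+2)*(n+1) \<le> M"
  shows "2^(n-1) \<le> card (slice P n)"
proof -
  define K where "K = 2*n+2"
  define emb where "emb = (\<lambda>p U. (\<lambda>i::nat. if i \<le> p then X (bxM K U i) else Y (byM da K U (cnt U p) i)))"
  define RM where "RM = (\<lambda>p U u v. if v \<le> p then al else if p < u then be
      else if tieM da U (cnt U p) u v then mu else g)"
  have real: "strict_mono_on {1..n} (emb p U) \<and> emb p U ` {1..n} \<subseteq> {1..N} \<and>
      (\<forall>u v. 1 \<le> u \<longrightarrow> u < v \<longrightarrow> v \<le> n \<longrightarrow> ({emb p U u, emb p U v} \<in> E) = RM p U u v)"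
    if vM: "validM n p U" for p U
  proof -
    have Mb': "K*(n+1) \<le> M" using Mb K_def by simp
    have fe: "emb p U = (\<lambda>i. if i \<le> p then X (bxM K U i) else Y (byM da K U (cnt U p) i))"
      unfolding emb_def by simp
    note r = M_real[OF cl tie vM refl K_def Mb' fe]
    show ?thesis using r unfolding RM_def by blast
  qed
  have GP: "(n, induced_ordered E (emb p U) n) \<in> P" if "validM n p U" for p U
    using real[OF that] by (intro ind_in_P[OF her inP]) auto
  have Req: "RM p U u v = RM p' U' u v"
    if v1: "validM n p U" and v2: "validM n p' U'"
      and eq: "induced_ordered E (emb p U) n = induced_ordered E (emb p' U') n"
      and uv: "1 \<le> u" "u < v" "v \<le> n" for p U p' U' u v
  proof -
    have r1: "({emb p U u, emb p U v} \<in> E) = RM p U u v" using real[OF v1] uv by blast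
    have r2: "({emb p' U' u, emb p' U' v} \<in> E) = RM p' U' u v" using real[OF v2] uv by blast
    have "({emb p U u, emb p U v} \<in> E) = ({emb p' U' u, emb p' U' v} \<in> E)"
      using ind_eq_edge[OF eq, of u v] uv by simp
    then show ?thesis using r1 r2 by simp
  qed
  have Usub: "U \<subseteq> U'"
    if v1: "validM n p U"
      and eqR: "\<forall>u v. 1 \<le> u \<longrightarrow> u < v \<longrightarrow> v \<le> n \<longrightarrow> RM p U u v = RM p' U' u v"
      and H: "\<forall>u v. 1 \<le> u \<longrightarrow> u \<le> p \<longrightarrow> p < v \<longrightarrow> v \<le> n \<longrightarrow> RM p' U' u v = mu \<longrightarrow> u \<in> U' \<and> v \<in> U'"
    for p U p' U'
  proof
    fix u assume uU: "u \<in> U"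
    have Us: "U \<subseteq> {1..n}" using v1 unfolding validM_def by auto
    then have u1: "1 \<le> u" "u \<le> n" using uU by auto
    show "u \<in> U'"
    proof (cases "u \<le> p")
      case True
      obtain v where v: "p < v" "v \<le> n" "tieM da U (cnt U p) u v"
        using partner(1)[OF v1 refl uU True] by blast
      have "RM p U u v = mu" using v True unfolding RM_def by auto
      then have "RM p' U' u v = mu" using eqR u1 v True by auto
      then show ?thesis using H u1 True v by blast
    next
      case False
      obtain w where w: "1 \<le> w" "w \<le> p" "tieM da U (cnt U p) w u"
        using partner(2)[OF v1 refl uU] False by auto
      have "RM p U w u = mu" using w False unfolding RM_def by auto
      then have "RM p' U' w u = mu" using eqR u1 w False by auto
      then show ?thesis using H u1 w False by auto
    qed
  qed
  have Hsame: "\<forall>u v. 1 \<le> u \<longrightarrow> u \<le> p \<longrightarrow> p < v \<longrightarrow> v \<le> n \<longrightarrow> RM p U' u v = mu \<longrightarrow> u \<in> U' \<and> v \<in> U'"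
    for p U'
    using mug unfolding RM_def tieM_def by auto
  have Ueq: "U = U'" if v1: "validM n p U" and v2: "validM n p U'"
      and eq: "induced_ordered E (emb p U) n = induced_ordered E (emb p U') n" for p U U'
  proof -
    have e1: "\<forall>u v. 1 \<le> u \<longrightarrow> u < v \<longrightarrow> v \<le> n \<longrightarrow> RM p U u v = RM p U' u v"
      using Req[OF v1 v2 eq] by blast
    have e2: "\<forall>u v. 1 \<le> u \<longrightarrow> u < v \<longrightarrow> v \<le> n \<longrightarrow> RM p U' u v = RM p U u v"
      using e1 by auto
    show ?thesis using Usub[OF v1 e1 Hsame] Usub[OF v2 e2 Hsame] by auto
  qed
  have card_pow: "card (Pow {a..b}) = 2^(b + 1 - a)" for a b :: nat
    by (simp add: card_Pow)
  show ?thesis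
  proof (cases "al \<noteq> g")
    case True
    define pf where "pf = (\<lambda>S::nat set. n - card S)"
    define Uf where "Uf = (\<lambda>S. (S \<inter> {1..pf S}) \<union> ({pf S+1..n} - S))"
    define F where "F = Pow {2..n}"
    have vF: "validM n (pf S) (Uf S) \<and> 1 \<le> pf S \<and> 1 \<notin> Uf S \<and>
        S = (Uf S \<inter> {1..pf S}) \<union> ({pf S+1..n} - Uf S)" if "S \<in> F" for S
    proof -
      have S: "S \<subseteq> {2..n}" using that unfolding F_def by auto
      then have S1: "S \<subseteq> {1..n}" by auto
      have cS: "card S \<le> n - 1" using card_mono[OF _ S] by simp
      have p1: "1 \<le> pf S" "pf S \<le> n" using cS n1 unfolding pf_def by auto
      have cs: "card S = cnt S (pf S) + card (S \<inter> {pf S+1..n})" by (rule cnt_split[OF S1 p1(2)])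
      have cd: "card ({pf S+1..n} - S) + card (S \<inter> {pf S+1..n}) = n - pf S"
        by (rule card_diff_split[OF S1 p1(2)])
      have i1: "Uf S \<inter> {1..pf S} = S \<inter> {1..pf S}" unfolding Uf_def by auto
      have i2: "Uf S \<inter> {pf S+1..n} = {pf S+1..n} - S" unfolding Uf_def by auto
      have "n - pf S = card S" using cS n1 unfolding pf_def by auto
      then have bal: "cnt (Uf S) (pf S) = card (Uf S \<inter> {pf S+1..n})"
        using cs cd i1 i2 unfolding cnt_def by simp
      have "Uf S \<subseteq> {1..n}" unfolding Uf_def using S1 by auto
      then have "validM n (pf S) (Uf S)" using bal p1 unfolding validM_def by simp
      moreover have "1 \<notin> Uf S" using S p1 unfolding Uf_def by auto
      moreover have "S = (Uf S \<inter> {1..pf S}) \<union> ({pf S+1..n} - Uf S)"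
        using S1 unfolding Uf_def by auto
      ultimately show ?thesis using p1 by simp
    qed
    show ?thesis
    proof (rule count_lemma[OF her _ _ _, of F "2^(n-1)" n "\<lambda>S. induced_ordered E (emb (pf S) (Uf S)) n"])
      show "finite F" unfolding F_def by simp
      show "2^(n-1) \<le> card F" unfolding F_def using card_pow[of 2 n] n1 by simp
      show "(n, induced_ordered E (emb (pf S) (Uf S)) n) \<in> P" if "S \<in> F" for S
        using GP vF[OF that] by blast
      show "inj_on (\<lambda>S. induced_ordered E (emb (pf S) (Uf S)) n) F"
      proof (rule inj_onI)
        fix S S' assume SF: "S \<in> F" and SF': "S' \<in> F"
          and eq: "induced_ordered E (emb (pf S) (Uf S)) n = induced_ordered E (emb (pf S') (Uf S')) n"
        note a = vF[OF SF] and b = vF[OF SF']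
        have eR: "RM (pf S) (Uf S) u v = RM (pf S') (Uf S') u v" if "1 \<le> u" "u < v" "v \<le> n" for u v
          using Req[OF _ _ eq that] a b by blast
        have nl: False if "pf S1 < pf S2" "S1 \<in> F" "S2 \<in> F"
          "\<forall>u v. 1 \<le> u \<longrightarrow> u < v \<longrightarrow> v \<le> n \<longrightarrow> RM (pf S1) (Uf S1) u v = RM (pf S2) (Uf S2) u v"
          for S1 S2
        proof -
          note c1 = vF[OF that(2)] and c2 = vF[OF that(3)]
          have "pf S2 \<le> n" using c2 unfolding validM_def by simp
          then have "RM (pf S1) (Uf S1) 1 (pf S2) = RM (pf S2) (Uf S2) 1 (pf S2)"
            using that c1 by auto
          moreover have "RM (pf S1) (Uf S1) 1 (pf S2) = g"
            using that c1 unfolding RM_def tieM_def by auto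
          moreover have "RM (pf S2) (Uf S2) 1 (pf S2) = al" unfolding RM_def by simp
          ultimately show False using True by simp
        qed
        have pp: "pf S = pf S'"
          using nl[of S S'] nl[of S' S] SF SF' eR by (metis linorder_neqE_nat)
        have "Uf S = Uf S'" using Ueq[of "pf S" "Uf S" "Uf S'"] a b pp eq by simp
        then show "S = S'" using a b pp by metis
      qed
    qed
  next
    case False
    note alg = False
    show ?thesis
    proof (cases "be \<noteq> g")
      case True
      define pf where "pf = (\<lambda>S::nat set. n - 1 - card S)"
      define Uf where "Uf = (\<lambda>S. (S \<inter> {1..pf S}) \<union> ({pf S+1..n-1} - S))"
      define F where "F = Pow {1..n-1}"
      have vF: "validM n (pf S) (Uf S) \<and> pf S < n \<and> n \<notin> Uf S \<and>
          S = (Uf S \<inter> {1..pf S}) \<union> ({pf S+1..n-1} - Uf S)" if "S \<in> F" for S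
      proof -
        have S1: "S \<subseteq> {1..n-1}" using that unfolding F_def by auto
        have cS: "card S \<le> n - 1" using card_mono[OF _ S1] by simp
        have p1: "pf S \<le> n - 1" unfolding pf_def by auto
        have cs: "card S = cnt S (pf S) + card (S \<inter> {pf S+1..n-1})" by (rule cnt_split[OF S1 p1])
        have cd: "card ({pf S+1..n-1} - S) + card (S \<inter> {pf S+1..n-1}) = n - 1 - pf S"
          by (rule card_diff_split[OF S1 p1])
        have i1: "Uf S \<inter> {1..pf S} = S \<inter> {1..pf S}" unfolding Uf_def by auto
        have i2: "Uf S \<inter> {pf S+1..n} = {pf S+1..n-1} - S" unfolding Uf_def using n1 by auto
        have "n - 1 - pf S = card S" using cS unfolding pf_def by auto
        then have bal: "cnt (Uf S) (pf S) = card (Uf S \<inter> {pf S+1..n})"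
          using cs cd i1 i2 unfolding cnt_def by simp
        have "Uf S \<subseteq> {1..n}" unfolding Uf_def using S1 by auto
        then have "validM n (pf S) (Uf S)" using bal p1 unfolding validM_def by simp
        moreover have "n \<notin> Uf S" using S1 n1 unfolding Uf_def by auto
        moreover have "S = (Uf S \<inter> {1..pf S}) \<union> ({pf S+1..n-1} - Uf S)"
          using S1 unfolding Uf_def by auto
        ultimately show ?thesis using p1 n1 by simp
      qed
      show ?thesis
      proof (rule count_lemma[OF her _ _ _, of F "2^(n-1)" n "\<lambda>S. induced_ordered E (emb (pf S) (Uf S)) n"])
        show "finite F" unfolding F_def by simp
        show "2^(n-1) \<le> card F" unfolding F_def using card_pow[of 1 "n-1"] n1 by simp
        show "(n, induced_ordered E (emb (pf S) (Uf S)) n) \<in> P" if "S \<in> F" for S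
          using GP vF[OF that] by blast
        show "inj_on (\<lambda>S. induced_ordered E (emb (pf S) (Uf S)) n) F"
        proof (rule inj_onI)
          fix S S' assume SF: "S \<in> F" and SF': "S' \<in> F"
            and eq: "induced_ordered E (emb (pf S) (Uf S)) n = induced_ordered E (emb (pf S') (Uf S')) n"
          note a = vF[OF SF] and b = vF[OF SF']
          have eR: "RM (pf S) (Uf S) u v = RM (pf S') (Uf S') u v" if "1 \<le> u" "u < v" "v \<le> n" for u v
            using Req[OF _ _ eq that] a b by blast
          have nl: False if "pf S1 < pf S2" "S1 \<in> F" "S2 \<in> F"
            "\<forall>u v. 1 \<le> u \<longrightarrow> u < v \<longrightarrow> v \<le> n \<longrightarrow> RM (pf S1) (Uf S1) u v = RM (pf S2) (Uf S2) u v"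
            for S1 S2
          proof -
            note c1 = vF[OF that(2)] and c2 = vF[OF that(3)]
            have "RM (pf S1) (Uf S1) (pf S2) n = RM (pf S2) (Uf S2) (pf S2) n"
              using that c2 by auto
            moreover have "RM (pf S1) (Uf S1) (pf S2) n = be"
              using that c2 unfolding RM_def by auto
            moreover have "RM (pf S2) (Uf S2) (pf S2) n = g" using c2 unfolding RM_def tieM_def by auto
            ultimately show False using True by simp
          qed
          have pp: "pf S = pf S'"
            using nl[of S S'] nl[of S' S] SF SF' eR by (metis linorder_neqE_nat)
          have "Uf S = Uf S'" using Ueq[of "pf S" "Uf S" "Uf S'"] a b pp eq by simp
          then show "S = S'" using a b pp by metis
        qed
      qed
    next
      case False
      then have beg: "be = g" by simp
      have alg': "al = g" using alg by simp
      define Uf where "Uf = (\<lambda>T::nat set. if even (card T) then T else insert n T)"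
      define pf where "pf = (\<lambda>T. SOME p. p \<le> n \<and> cnt (Uf T) p = card (Uf T) div 2)"
      define F where "F = Pow {1..n-1}"
      have vF: "validM n (pf T) (Uf T) \<and> T = Uf T \<inter> {1..n-1}" if "T \<in> F" for T
      proof -
        have T1: "T \<subseteq> {1..n-1}" using that unfolding F_def by auto
        have T2: "T \<subseteq> {1..n}" by (rule order_trans[OF T1]) auto
        have U1: "Uf T \<subseteq> {1..n}" using T2 n1 unfolding Uf_def by auto
        have finT: "finite T" using T1 finite_subset by blast
        have ev: "even (card (Uf T))"
        proof (cases "even (card T)")
          case True then show ?thesis unfolding Uf_def by simp
        next
          case False
          have "n \<notin> T" using T1 n1 by auto
          then show ?thesis using False finT unfolding Uf_def by simp
        qed
        have ex: "\<exists>p. p \<le> n \<and> cnt (Uf T) p = card (Uf T) div 2"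
        proof (cases "card (Uf T) div 2 = 0")
          case True then show ?thesis using cnt_0 by auto
        next
          case False
          have "cnt (Uf T) 0 < card (Uf T) div 2" "card (Uf T) div 2 \<le> cnt (Uf T) n"
            using False cnt_0 cnt_full[OF U1] by auto
          moreover have "0 < n" using n1 by simp
          ultimately obtain j where "0 < j" "j \<le> n" "cnt (Uf T) j = card (Uf T) div 2"
            using cnt_ivt by blast
          then show ?thesis by blast
        qed
        have pT: "pf T \<le> n" "cnt (Uf T) (pf T) = card (Uf T) div 2"
          using someI_ex[OF ex] unfolding pf_def by auto
        have "card (Uf T) = cnt (Uf T) (pf T) + card (Uf T \<inter> {pf T+1..n})"
          by (rule cnt_split[OF U1 pT(1)])
        then have "cnt (Uf T) (pf T) = card (Uf T \<inter> {pf T+1..n})" using pT(2) ev by auto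
        then have "validM n (pf T) (Uf T)" using pT U1 unfolding validM_def by simp
        moreover have "T = Uf T \<inter> {1..n-1}" using T1 unfolding Uf_def by auto
        ultimately show ?thesis by simp
      qed
      have Hg: "\<forall>u v. 1 \<le> u \<longrightarrow> u \<le> p \<longrightarrow> p < v \<longrightarrow> v \<le> n \<longrightarrow> RM p' U' u v = mu \<longrightarrow> u \<in> U' \<and> v \<in> U'"
        for p p' U'
        using mug alg' beg unfolding RM_def tieM_def by auto
      show ?thesis
      proof (rule count_lemma[OF her _ _ _, of F "2^(n-1)" n "\<lambda>T. induced_ordered E (emb (pf T) (Uf T)) n"])
        show "finite F" unfolding F_def by simp
        show "2^(n-1) \<le> card F" unfolding F_def using card_pow[of 1 "n-1"] n1 by simp
        show "(n, induced_ordered E (emb (pf T) (Uf T)) n) \<in> P" if "T \<in> F" for T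
          using GP vF[OF that] by blast
        show "inj_on (\<lambda>T. induced_ordered E (emb (pf T) (Uf T)) n) F"
        proof (rule inj_onI)
          fix S S' assume SF: "S \<in> F" and SF': "S' \<in> F"
            and eq: "induced_ordered E (emb (pf S) (Uf S)) n = induced_ordered E (emb (pf S') (Uf S')) n"
          note a = vF[OF SF] and b = vF[OF SF']
          have e1: "\<forall>u v. 1 \<le> u \<longrightarrow> u < v \<longrightarrow> v \<le> n \<longrightarrow> RM (pf S) (Uf S) u v = RM (pf S') (Uf S') u v"
            using Req[OF _ _ eq] a b by blast
          have e2: "\<forall>u v. 1 \<le> u \<longrightarrow> u < v \<longrightarrow> v \<le> n \<longrightarrow> RM (pf S') (Uf S') u v = RM (pf S) (Uf S) u v"
            using e1 by auto
          have "Uf S = Uf S'" using Usub[OF _ e1 Hg] Usub[OF _ e2 Hg] a b by blast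
          then show "S = S'" using a b by metis
        qed
      qed
    qed
  qed
qed


fun enc :: "bool list \<Rightarrow> nat" where
  "enc [] = 0"
| "enc (b # bs) = (if b then 1 else 0) + 2 * enc bs"

lemma enc_less: "enc bs < 2 ^ length bs"
  by (induction bs) auto

lemma enc_inj: "length bs = length cs \<Longrightarrow> enc bs = enc cs \<Longrightarrow> bs = cs"
proof (induction bs arbitrary: cs)
  case Nil then show ?case by simp
next
  case (Cons b bs)
  then obtain c cs' where cs: "cs = c # cs'" by (cases cs) auto
  have "(if b then 1 else 0) + 2 * enc bs = (if c then 1 else 0) + 2 * enc cs'"
    using Cons.prems cs by simp
  then have "b = c" "enc bs = enc cs'" by (cases b; cases c; simp; presburger)+
  then show ?case using Cons cs by simp
qed

lemma enum_set:
  fixes H :: "nat set"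
  assumes "finite H" "card H = m"
  shows "\<exists>h. (\<forall>j\<in>{1..m}. h j \<in> H) \<and> (\<forall>a\<in>{1..m}. \<forall>b\<in>{1..m}. a < b \<longrightarrow> h a < h b)"
proof -
  define sl where "sl = sorted_list_of_set H"
  have len: "length sl = m" using assms unfolding sl_def by simp
  have st: "sorted_wrt (<) sl" unfolding sl_def by (rule strict_sorted_list_of_set)
  have se: "set sl = H" using assms unfolding sl_def by simp
  show ?thesis
  proof (intro exI[of _ "\<lambda>j. sl ! (j - 1)"] conjI ballI impI)
    fix j assume "j \<in> {1..m}"
    then have "j - 1 < length sl" using len by auto
    then show "sl ! (j - 1) \<in> H" using se nth_mem by blast
  next
    fix a b assume "a \<in> {1..m}" "b \<in> {1..m}" "a < b"
    then show "sl ! (a - 1) < sl ! (b - 1)" using sorted_wrt_nth_less[OF st] len by auto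
  qed
qed

lemma alt_parity:
  fixes d :: "nat \<Rightarrow> bool" and K i :: nat
  assumes alt: "\<forall>i\<in>{1..<K}. d i \<longleftrightarrow> \<not> d (i+1)"
  shows "i \<in> {1..K} \<Longrightarrow> d i = (if odd i then d 1 else \<not> d 1)"
proof (induction i)
  case 0 then show ?case by simp
next
  case (Suc i)
  show ?case
  proof (cases "i = 0")
    case True then show ?thesis by simp
  next
    case False
    then have "i \<in> {1..<K}" using Suc.prems by auto
    then have "d (Suc i) = (\<not> d i)" using alt by auto
    moreover have "d i = (if odd i then d 1 else \<not> d 1)" using Suc False by auto
    ultimately show ?thesis by auto
  qed
qed

lemma mk_k1:
  assumes yv: "yv \<in> {1..N}" and wr: "w ` {1..2*k} \<subseteq> {1..N}" and wm: "strict_mono_on {1..2*k} w"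
    and side: "yv < w 1 \<or> yv > w (2*k)"
    and ed: "\<forall>j\<in>{1..2*k}. ({yv, w j} \<in> E) = (if odd j then A else B)" and AB: "A \<noteq> B"
  shows "kstruct1 k N E"
  unfolding kstruct1_def
proof (intro exI[of _ yv] exI[of _ w] conjI)
  show "\<forall>i\<in>{1..<2 * k}. ({yv, w i} \<in> E) = ({yv, w (i + 1)} \<notin> E)"
  proof
    fix i assume i: "i \<in> {1..<2*k}"
    then have "({yv, w i} \<in> E) = (if odd i then A else B)"
      "({yv, w (i+1)} \<in> E) = (if odd (i+1) then A else B)" using ed by auto
    then show "({yv, w i} \<in> E) = ({yv, w (i + 1)} \<notin> E)" using AB by auto
  qed
qed (use assms in auto)

lemma kstruct2_unify:
  assumes "kstruct2 k N E"
  shows "\<exists>da x y. x ` {1..2*k} \<subseteq> {1..N} \<and> y ` {1..2*k} \<subseteq> {1..N} \<and> strict_mono_on {1..2*k} x \<and>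
    (if da then strict_mono_on {1..2*k} y else strict_antimono_on {1..2*k} y) \<and>
    (\<forall>i\<in>{1..2*k}. \<forall>j\<in>{1..2*k}. x i < y j) \<and>
    (\<forall>i\<in>{1..<2*k}. {x i, y i} \<in> E \<longleftrightarrow> {x (i+1), y (i+1)} \<notin> E)"
proof -
  have xle: "x i \<le> x (2*k)" if "strict_mono_on {1..2*k} x" "i \<in> {1..2*k}" for x :: "nat \<Rightarrow> nat" and i
  proof (cases "i = 2*k")
    case False
    then have "x i < x (2*k)" using that by (intro strict_mono_onD[OF that(1)]) auto
    then show ?thesis by simp
  qed simp
  from assms show ?thesis unfolding kstruct2_def
  proof
    assume "kstruct2a k N E"
    then obtain x y where h: "x ` {1..2*k} \<subseteq> {1..N}" "y ` {1..2*k} \<subseteq> {1..N}"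
        "strict_mono_on {1..2*k} x" "strict_mono_on {1..2*k} y" "x (2*k) < y 1"
        "\<forall>i \<in> {1..<2*k}. {x i, y i} \<in> E \<longleftrightarrow> {x (i+1), y (i+1)} \<notin> E"
      unfolding kstruct2a_def by blast
    have yge: "y 1 \<le> y j" if "j \<in> {1..2*k}" for j
    proof (cases "j = 1")
      case False
      then have "y 1 < y j" using that by (intro strict_mono_onD[OF h(4)]) auto
      then show ?thesis by simp
    qed simp
    have "\<forall>i\<in>{1..2*k}. \<forall>j\<in>{1..2*k}. x i < y j"
      using xle[OF h(3)] yge h(5) by (meson le_less_trans less_le_trans)
    then show ?thesis using h by (intro exI[of _ True] exI[of _ x] exI[of _ y]) auto
  next
    assume "kstruct2b k N E"
    then obtain x y where h: "x ` {1..2*k} \<subseteq> {1..N}" "y ` {1..2*k} \<subseteq> {1..N}"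
        "strict_mono_on {1..2*k} x" "strict_antimono_on {1..2*k} y" "x (2*k) < y (2*k)"
        "\<forall>i \<in> {1..<2*k}. {x i, y i} \<in> E \<longleftrightarrow> {x (i+1), y (i+1)} \<notin> E"
      unfolding kstruct2b_def by blast
    have yge: "y (2*k) \<le> y j" if "j \<in> {1..2*k}" for j
    proof (cases "j = 2*k")
      case False
      have "\<forall>a\<in>{1..2*k}. \<forall>b\<in>{1..2*k}. a < b \<longrightarrow> y b < y a"
        using h(4) by (simp add: monotone_on_def)
      then have "y (2*k) < y j" using that False by auto
      then show ?thesis by simp
    qed simp
    have "\<forall>i\<in>{1..2*k}. \<forall>j\<in>{1..2*k}. x i < y j"
      using xle[OF h(3)] yge h(5) by (meson le_less_trans less_le_trans)
    then show ?thesis using h by (intro exI[of _ False] exI[of _ x] exI[of _ y]) auto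
  qed
qed


lemma type2:
  fixes n m N0 k :: nat
  assumes her: "hereditary P" and inP: "(N,E) \<in> P" and ks: "kstruct2 k N E" and n1: "1 \<le> n"
    and mdef: "m = 2*(n+1)*(n+1) + n + 2"
    and ram: "partn_lst {..<N0} (replicate 4096 m) 2" and kN: "N0 \<le> k"
  shows "2^(n-1) \<le> card (slice P n)"
proof -
  obtain da x y where xr: "x ` {1..2*k} \<subseteq> {1..N}" and yr: "y ` {1..2*k} \<subseteq> {1..N}"
    and xm: "strict_mono_on {1..2*k} x"
    and ym: "if da then strict_mono_on {1..2*k} y else strict_antimono_on {1..2*k} y"
    and xy: "\<forall>i\<in>{1..2*k}. \<forall>j\<in>{1..2*k}. x i < y j"
    and alt: "\<forall>i\<in>{1..<2*k}. {x i, y i} \<in> E \<longleftrightarrow> {x (i+1), y (i+1)} \<notin> E"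
    using kstruct2_unify[OF ks] by blast
  define D where "D = ({x 1, y 1} \<in> E)"
  have dpar: "({x i, y i} \<in> E) = (if odd i then D else \<not> D)" if "i \<in> {1..2*k}" for i
    using alt_parity[of "2*k" "\<lambda>i. {x i, y i} \<in> E" i] alt that unfolding D_def by auto
  define idx where "idx = (\<lambda>(t::nat) (c::bool). 2*t + (if c then 2 else 1))"
  define XX where "XX = (\<lambda>t s c. {x (idx t c), x (idx s c)} \<in> E)"
  define YY where "YY = (\<lambda>t s c. {y (idx t c), y (idx s c)} \<in> E)"
  define XY where "XY = (\<lambda>t s c c'. {x (idx t c), y (idx s c')} \<in> E)"
  define YX where "YX = (\<lambda>t s c c'. {y (idx t c), x (idx s c')} \<in> E)"
  define lst where "lst = (\<lambda>t s. [XX t s False, XX t s True, YY t s False, YY t s True,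
      XY t s False False, XY t s False True, XY t s True False, XY t s True True,
      YX t s False False, YX t s False True, YX t s True False, YX t s True True])"
  define f where "f = (\<lambda>A::nat set. enc (lst (Min A) (Max A)))"
  have fr: "f \<in> nsets {..<N0} 2 \<rightarrow> {..<length (replicate 4096 m)}"
  proof
    fix A
    have "f A < 2 ^ length (lst (Min A) (Max A))" unfolding f_def by (rule enc_less)
    then show "f A \<in> {..<length (replicate 4096 m)}" unfolding lst_def by simp
  qed
  obtain i H where iH: "i < length (replicate 4096 m)" "H \<in> nsets {..<N0} (replicate 4096 m ! i)"
    and hom: "f ` nsets H 2 \<subseteq> {i}"
    using partn_lstE[OF ram fr refl] by blast
  have Hs: "H \<subseteq> {..<N0}" "finite H" "card H = m" using iH unfolding nsets_def by auto
  have colH: "enc (lst t s) = i" if "t \<in> H" "s \<in> H" "t < s" for t s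
  proof -
    have "{t, s} \<in> nsets H 2" using that unfolding nsets_def by auto
    then have "f {t, s} = i" using hom by blast
    moreover have "Min {t, s} = t" "Max {t, s} = s" using that by auto
    ultimately show ?thesis unfolding f_def by simp
  qed
  obtain h where hH: "\<forall>j\<in>{1..m}. h j \<in> H" and hm: "\<forall>a\<in>{1..m}. \<forall>b\<in>{1..m}. a < b \<longrightarrow> h a < h b"
    using enum_set[OF Hs(2,3)] by blast
  have m2: "2 \<le> m" "n + 1 \<le> m - 1" "(n+1)*(n+1) \<le> m" "(2*n+2)*(n+1) \<le> m"
    using mdef by (auto simp: algebra_simps)
  have hk: "h j < k" if "j \<in> {1..m}" for j using hH Hs(1) kN that by fastforce
  have idxr: "idx (h j) c \<in> {1..2*k}" if "j \<in> {1..m}" for j c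
    using hk[OF that] unfolding idx_def by auto
  have idxm: "idx (h a) c < idx (h b) c'" if "a \<in> {1..m}" "b \<in> {1..m}" "a < b" for a b c c'
  proof -
    have "h a < h b" using hm that by auto
    then show ?thesis unfolding idx_def by auto
  qed
  have xlt: "x i < x j" if "i \<in> {1..2*k}" "j \<in> {1..2*k}" "i < j" for i j
    using xm that by (simp add: strict_mono_onD)
  have ylt: "if da then y i < y j else y j < y i" if "i \<in> {1..2*k}" "j \<in> {1..2*k}" "i < j" for i j
    using ym that by (cases da) (auto simp: strict_mono_onD monotone_on_def)
  define XXv where "XXv = XX (h 1) (h 2)"
  define YYv where "YYv = YY (h 1) (h 2)"
  define XYv where "XYv = XY (h 1) (h 2)"
  define YXv where "YXv = YX (h 1) (h 2)"
  have homv: "XX (h a) (h b) c = XXv c \<and> YY (h a) (h b) c = YYv c \<and>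
      XY (h a) (h b) c c' = XYv c c' \<and> YX (h a) (h b) c c' = YXv c c'"
    if "a \<in> {1..m}" "b \<in> {1..m}" "a < b" for a b c c'
  proof -
    have "enc (lst (h a) (h b)) = enc (lst (h 1) (h 2))"
      using colH[of "h a" "h b"] colH[of "h 1" "h 2"] hH hm that m2 by auto
    then have "lst (h a) (h b) = lst (h 1) (h 2)" by (rule enc_inj[rotated]) (simp add: lst_def)
    then show ?thesis unfolding lst_def XXv_def YYv_def XYv_def YXv_def by (cases c; cases c') auto
  qed
  have mkclean: "clean da E N (\<lambda>j. x (idx (h j) cx)) (\<lambda>j. y (idx (h j) cy)) m
      (XXv cx) (YYv cy) (XYv cx cy) (YXv cy cx)" for cx cy
    unfolding clean_def
  proof (intro conjI ballI impI)
    show "(\<lambda>j. x (idx (h j) cx)) ` {1..m} \<subseteq> {1..N}" using xr idxr by fast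
    show "(\<lambda>j. y (idx (h j) cy)) ` {1..m} \<subseteq> {1..N}" using yr idxr by fast
    show "strict_mono_on {1..m} (\<lambda>j. x (idx (h j) cx))"
      by (rule strict_mono_onI) (use xlt idxr idxm in auto)
    show "if da then strict_mono_on {1..m} (\<lambda>j. y (idx (h j) cy))
        else strict_antimono_on {1..m} (\<lambda>j. y (idx (h j) cy))"
    proof (cases da)
      case True
      then show ?thesis using ylt idxr idxm by (auto intro!: strict_mono_onI)
    next
      case False
      have "y (idx (h b) cy) < y (idx (h a) cy)" if "a \<in> {1..m}" "b \<in> {1..m}" "a < b" for a b
        using ylt[OF idxr[OF that(1)] idxr[OF that(2)] idxm[OF that]] False by simp
      then show ?thesis using False by (auto simp: monotone_on_def)
    qed
    fix a b assume ab: "a \<in> {1..m}" "b \<in> {1..m}"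
    show "x (idx (h a) cx) < y (idx (h b) cy)" using xy idxr ab by auto
    assume lt: "a < b"
    note hv = homv[OF ab lt]
    show "({x (idx (h a) cx), x (idx (h b) cx)} \<in> E) = XXv cx" using hv[of cx cx] unfolding XX_def by simp
    show "({y (idx (h a) cy), y (idx (h b) cy)} \<in> E) = YYv cy" using hv[of cy cy] unfolding YY_def by simp
    show "({x (idx (h a) cx), y (idx (h b) cy)} \<in> E) = XYv cx cy" using hv[of cx cy] unfolding XY_def by simp
    show "({x (idx (h b) cx), y (idx (h a) cy)} \<in> E) = YXv cy cx"
      using hv[of cy cx] unfolding YX_def by (simp add: insert_commute)
  qed
  show ?thesis
  proof (cases "\<exists>cx cy. XYv cx cy \<noteq> YXv cy cx")
    case True
    then obtain cx cy where ne: "XYv cx cy \<noteq> YXv cy cx" by blast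
    show ?thesis by (rule F_count[OF her inP mkclean[of cx cy] ne n1 m2(3)])
  next
    case False
    then have sym: "YXv cy cx = XYv cx cy" for cx cy by auto
    show ?thesis
    proof (cases "\<exists>c'. XYv False c' \<noteq> XYv True c'")
      case True
      then obtain c' where ne: "XYv False c' \<noteq> XYv True c'" by blast
      define yv where "yv = y (idx (h m) c')"
      define w where "w = (\<lambda>j::nat. x (idx (h ((j+1) div 2)) (even j)))"
      have bj: "(j+1) div 2 \<in> {1..m}" "(j+1) div 2 < m" if "j \<in> {1..2*(m-1)}" for j
        using that m2 by auto
      have "kstruct1 (m-1) N E"
      proof (rule mk_k1[of yv N w "m-1" E "XYv False c'" "XYv True c'"])
        have "m \<in> {1..m}" using m2 by auto
        then have "idx (h m) c' \<in> {1..2*k}" by (rule idxr)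
        then show "yv \<in> {1..N}" using yr unfolding yv_def by blast
        show "w ` {1..2*(m-1)} \<subseteq> {1..N}" using xr idxr bj unfolding w_def by fast
        show "strict_mono_on {1..2*(m-1)} w"
        proof (rule strict_mono_onI)
          fix j j' assume jj: "j \<in> {1..2*(m-1)}" "j' \<in> {1..2*(m-1)}" "j < j'"
          have "idx (h ((j+1) div 2)) (even j) < idx (h ((j'+1) div 2)) (even j')"
          proof (cases "(j+1) div 2 < (j'+1) div 2")
            case True
            then show ?thesis using idxm bj jj by auto
          next
            case False
            then have "(j+1) div 2 = (j'+1) div 2" using jj(3) by (simp add: div_le_mono)
            then have "odd j" "even j'" using jj(3) by presburger+
            then show ?thesis unfolding idx_def using \<open>(j+1) div 2 = (j'+1) div 2\<close> by simp
          qed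
          then show "w j < w j'" unfolding w_def using xlt idxr bj jj by auto
        qed
        show "yv < w 1 \<or> w (2*(m-1)) < yv"
        proof -
          have "2*(m-1) \<in> {1..2*(m-1)}" using m2 by auto
          then have "w (2*(m-1)) < yv" unfolding w_def yv_def using xy idxr bj m2 by auto
          then show ?thesis by simp
        qed
        show "\<forall>j\<in>{1..2*(m-1)}. ({yv, w j} \<in> E) = (if odd j then XYv False c' else XYv True c')"
        proof
          fix j assume j: "j \<in> {1..2*(m-1)}"
          have "XY (h ((j+1) div 2)) (h m) (even j) c' = XYv (even j) c'"
            using homv[OF bj(1)[OF j] _ bj(2)[OF j]] m2 by auto
          then show "({yv, w j} \<in> E) = (if odd j then XYv False c' else XYv True c')"
            unfolding yv_def w_def XY_def by (auto simp: insert_commute)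
        qed
        show "XYv False c' \<noteq> XYv True c'" by (rule ne)
      qed
      then show ?thesis using type1[OF her inP _ n1] m2 by auto
    next
      case False
      note noA = False
      show ?thesis
      proof (cases "\<exists>c. XYv c False \<noteq> XYv c True")
        case True
        then obtain c where ne: "XYv c False \<noteq> XYv c True" by blast
        define xv where "xv = x (idx (h 1) c)"
        define bl where "bl = (\<lambda>j::nat. if da then (j+1) div 2 + 1 else m + 1 - (j+1) div 2)"
        define sb where "sb = (\<lambda>j::nat. if da then even j else odd j)"
        define w where "w = (\<lambda>j::nat. y (idx (h (bl j)) (sb j)))"
        have bj: "bl j \<in> {1..m}" "1 < bl j" if "j \<in> {1..2*(m-1)}" for j
          using that m2 unfolding bl_def by auto
        have "kstruct1 (m-1) N E"
        proof (rule mk_k1[of xv N w "m-1" E "XYv c (\<not> da)" "XYv c da"])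
          have "1 \<in> {1..m}" using m2 by auto
          then have "idx (h 1) c \<in> {1..2*k}" by (rule idxr)
          then show "xv \<in> {1..N}" using xr unfolding xv_def by blast
          show "w ` {1..2*(m-1)} \<subseteq> {1..N}" using yr idxr bj unfolding w_def by fast
          show "strict_mono_on {1..2*(m-1)} w"
          proof (rule strict_mono_onI)
            fix j j' assume jj: "j \<in> {1..2*(m-1)}" "j' \<in> {1..2*(m-1)}" "j < j'"
            have dv: "(j+1) div 2 \<le> (j'+1) div 2" using jj(3) by (simp add: div_le_mono)
            show "w j < w j'"
            proof (cases da)
              case True
              have "idx (h (bl j)) (sb j) < idx (h (bl j')) (sb j')"
              proof (cases "(j+1) div 2 < (j'+1) div 2")
                case True
                then have "bl j < bl j'" using \<open>da\<close> unfolding bl_def by simp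
                then show ?thesis using idxm bj jj by auto
              next
                case False
                then have e: "(j+1) div 2 = (j'+1) div 2" using dv by simp
                then have "odd j" "even j'" using jj(3) by presburger+
                then show ?thesis unfolding idx_def bl_def sb_def using e \<open>da\<close> by simp
              qed
              then show ?thesis unfolding w_def using ylt[OF idxr[OF bj(1)[OF jj(1)]] idxr[OF bj(1)[OF jj(2)]]] True
                by simp
            next
              case False
              have "idx (h (bl j')) (sb j') < idx (h (bl j)) (sb j)"
              proof (cases "(j+1) div 2 < (j'+1) div 2")
                case True
                have "(j'+1) div 2 \<le> m - 1" using jj(2) by auto
                then have "bl j' < bl j" using \<open>\<not> da\<close> True unfolding bl_def by simp
                then show ?thesis using idxm bj jj by auto
              next
                case False
                then have e: "(j+1) div 2 = (j'+1) div 2" using dv by simp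
                then have "odd j" "even j'" using jj(3) by presburger+
                then show ?thesis unfolding idx_def bl_def sb_def using e \<open>\<not> da\<close> by simp
              qed
              then show ?thesis unfolding w_def using ylt[OF idxr[OF bj(1)[OF jj(2)]] idxr[OF bj(1)[OF jj(1)]]] False
                by simp
            qed
          qed
          show "xv < w 1 \<or> w (2*(m-1)) < xv"
          proof -
            have "1 \<in> {1..2*(m-1)}" using m2 by auto
            then have "xv < w 1" unfolding w_def xv_def using xy idxr bj m2 by auto
            then show ?thesis by simp
          qed
          show "\<forall>j\<in>{1..2*(m-1)}. ({xv, w j} \<in> E) = (if odd j then XYv c (\<not> da) else XYv c da)"
          proof
            fix j assume j: "j \<in> {1..2*(m-1)}"
            have "XY (h 1) (h (bl j)) c (sb j) = XYv c (sb j)"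
              using homv[OF _ bj(1)[OF j] bj(2)[OF j]] m2 by auto
            then show "({xv, w j} \<in> E) = (if odd j then XYv c (\<not> da) else XYv c da)"
              unfolding xv_def w_def XY_def sb_def by (cases da) auto
          qed
          show "XYv c (\<not> da) \<noteq> XYv c da" using ne by (cases da) auto
        qed
        then show ?thesis using type1[OF her inP _ n1] m2 by auto
      next
        case False
        then have c1: "XYv c False = XYv c True" for c by auto
        have c2: "XYv False c' = XYv True c'" for c' using noA by auto
        define g where "g = XYv False False"
        have allg: "XYv c c' = g" for c c' unfolding g_def using c1 c2 by (cases c; cases c') auto
        define c where "c = (D = g)"
        define mu where "mu = (\<not> g)"
        have cl: "clean da E N (\<lambda>j. x (idx (h j) c)) (\<lambda>j. y (idx (h j) c)) m (XXv c) (YYv c) g g"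
          using mkclean[of c c] allg sym by simp
        have tie: "\<forall>a\<in>{1..m}. ({x (idx (h a) c), y (idx (h a) c)} \<in> E) = mu"
        proof
          fix a assume a: "a \<in> {1..m}"
          have "({x (idx (h a) c), y (idx (h a) c)} \<in> E) = (if odd (idx (h a) c) then D else \<not> D)"
            by (rule dpar[OF idxr[OF a]])
          then show "({x (idx (h a) c), y (idx (h a) c)} \<in> E) = mu"
            unfolding idx_def c_def mu_def by (cases "D = g") auto
        qed
        show ?thesis by (rule M_count[OF her inP cl tie _ n1 m2(4)]) (simp add: mu_def)
      qed
    qed
  qed
qed


theorem lemma5:
  fixes P :: "(nat \<times> nat set set) set"
  assumes "hereditary P"
    and "\<forall>K. \<exists>k \<ge> K. \<exists>(n, E) \<in> P. kstruct1 k n E \<or> kstruct2 k n E"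
    and "n \<ge> 1"
  shows "card (slice P n) \<ge> 2 ^ (n - 1)"
proof -
  define m where "m = 2*(n+1)*(n+1) + n + 2"
  obtain N0 :: nat where ram: "partn_lst {..<N0} (replicate 4096 m) 2"
    using ramsey_full by blast
  obtain k where kK: "k \<ge> max n N0" and ex: "\<exists>(N, E) \<in> P. kstruct1 k N E \<or> kstruct2 k N E"
    using assms(2) by blast
  then obtain N E where inP: "(N, E) \<in> P" and ks: "kstruct1 k N E \<or> kstruct2 k N E" by blast
  from ks show ?thesis
  proof
    assume "kstruct1 k N E"
    then show ?thesis using type1[OF assms(1) inP _ assms(3)] kK by auto
  next
    assume "kstruct2 k N E"
    then show ?thesis using type2[OF assms(1) inP _ assms(3) m_def ram] kK by auto
  qed
qed

end
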